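(* Let $(V,h)$ be a real quadratic space with $d=\dim_\mathbb{R}V$ odd, and let $\gamma:\mathrm{Cl}(V,h)\to\mathrm{End}_\mathbb{C}(S)$ be an irreducible complex Clifford representation, with $\mathbb{C}$-linear extension $\gamma_\mathbb{C}:\mathbb{C}\mathrm{l}(V,h)\to\mathrm{End}_\mathbb{C}(S)$. Then $\gamma_\mathbb{C}$ restricts to a group isomorphism from $\Gamma^s(V,h)\simeq\mathrm{Spin}^c(V,h)\cdot\mathbb{C}^\times$ onto $\mathrm{L}_\gamma$. In particular, $\mathrm{L}_\gamma$ is homotopy-equivalent to $\mathrm{Spin}^c(V,h)$.
   Context: $\mathrm{Cl}(V,h)$ is the real Clifford algebra of $(V,h)$ and $\mathbb{C}\mathrm{l}(V,h)=\mathrm{Cl}(V,h)\otimes_\mathbb{R}\mathbb{C}$, with even part $\mathbb{C}\mathrm{l}^+(V,h)$. Let $\pi_\mathbb{C}$ be the complex-linear parity involution, $\tau_\mathbb{C}$ the antilinear extension of the reversion, $\tilde\tau_\mathbb{C}=\tau_\mathbb{C}\circ\pi_\mathbb{C}$, $N(x)=\tilde\tau_\mathbb{C}(x)x$, and $\widetilde{\mathrm{Ad}}(x)(y)=\pi_\mathbb{C}(x)yx^{-1}$. The complex Clifford group is $\Gamma(V,h)=\{x\in\mathbb{C}\mathrm{l}(V,h)^\times\,|\,\widetilde{\mathrm{Ad}}(x)(V)=V\}$, $\Gamma^s(V,h)=\Gamma(V,h)\cap\mathbb{C}\mathrm{l}^+(V,h)$, and $\mathrm{Spin}^c(V,h)=\ker(|N|:\Gamma^s(V,h)\to\mathbb{R}_{>0})$;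 $\mathrm{Spin}^c(V,h)\cdot\mathbb{C}^\times$ denotes the subgroup of products of elements of $\mathrm{Spin}^c(V,h)$ with nonzero complex scalars. A complex Clifford representation is a unital real-algebra morphism $\mathrm{Cl}(V,h)\to\mathrm{End}_\mathbb{C}(S)$. The complex Lipschitz group is $\mathrm{L}_\gamma=\{\varphi\in\mathrm{Aut}_\mathbb{C}(S)\,|\,\varphi\gamma(V)\varphi^{-1}=\gamma(V)\}$. *)

theory Defs
  imports "HOL-Analysis.Analysis" "Jordan_Normal_Form.Matrix"
begin

text \<open>Model of a real quadratic space of dimension d: V = R^d with the diagonal
form h(x,y) = sum_i eps_i x_i y_i, eps_i nonzero for i < d (every nondegenerate
real quadratic space is isometric to such a one).  Clifford algebra elements are
coefficient functions on the basis e_A, A a subset of {0..<d}; e_A e_B is given by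
the usual sign rule, with e_i e_i = h(e_i,e_i) = eps_i.\<close>

type_synonym 'a cl = "nat set \<Rightarrow> 'a"

definition cl_carrier :: "nat \<Rightarrow> ('a::zero) cl set" where
  "cl_carrier d = {x. \<forall>A. \<not> A \<subseteq> {..<d} \<longrightarrow> x A = 0}"

definition cl_sign :: "(nat \<Rightarrow> real) \<Rightarrow> nat set \<Rightarrow> nat set \<Rightarrow> real" where
  "cl_sign eps A B = (-1) ^ card {(a,b). a \<in> A \<and> b \<in> B \<and> b < a} * (\<Prod>i\<in>A \<inter> B. eps i)"

definition cl_mult :: "nat \<Rightarrow> (nat \<Rightarrow> real) \<Rightarrow> ('a::real_algebra_1) cl \<Rightarrow> 'a cl \<Rightarrow> 'a cl" where
  "cl_mult d eps x y = (\<lambda>C. if C \<subseteq> {..<d} then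
     (\<Sum>A\<in>Pow {..<d}. \<Sum>B\<in>Pow {..<d}.
        if (A - B) \<union> (B - A) = C then of_real (cl_sign eps A B) * x A * y B else 0)
     else 0)"

definition cl_scal :: "'a::zero \<Rightarrow> 'a cl" where
  "cl_scal c = (\<lambda>A. if A = {} then c else 0)"

definition cl_basis :: "nat set \<Rightarrow> ('a::{zero,one}) cl" where
  "cl_basis A = (\<lambda>B. if B = A then 1 else 0)"

definition cl_vecs :: "nat \<Rightarrow> real cl set" where
  "cl_vecs d = {x \<in> cl_carrier d. \<forall>A. card A \<noteq> 1 \<longrightarrow> x A = 0}"

definition cl_complexify :: "real cl \<Rightarrow> complex cl" where
  "cl_complexify x = (\<lambda>A. complex_of_real (x A))"

definition cl_even :: "nat \<Rightarrow> complex cl set" where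
  "cl_even d = {x \<in> cl_carrier d. \<forall>A. odd (card A) \<longrightarrow> x A = 0}"

definition cl_par :: "complex cl \<Rightarrow> complex cl" where
  "cl_par x = (\<lambda>A. (-1) ^ card A * x A)"

definition cl_rev :: "complex cl \<Rightarrow> complex cl" where
  "cl_rev x = (\<lambda>A. (-1) ^ (card A * (card A - 1) div 2) * cnj (x A))"

definition cl_tilde_rev :: "complex cl \<Rightarrow> complex cl" where
  "cl_tilde_rev x = cl_rev (cl_par x)"

definition cl_N :: "nat \<Rightarrow> (nat \<Rightarrow> real) \<Rightarrow> complex cl \<Rightarrow> complex cl" where
  "cl_N d eps x = cl_mult d eps (cl_tilde_rev x) x"

definition cl_units :: "nat \<Rightarrow> (nat \<Rightarrow> real) \<Rightarrow> complex cl set" where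
  "cl_units d eps = {x \<in> cl_carrier d. \<exists>y \<in> cl_carrier d.
      cl_mult d eps x y = cl_scal 1 \<and> cl_mult d eps y x = cl_scal 1}"

definition cl_inverse :: "nat \<Rightarrow> (nat \<Rightarrow> real) \<Rightarrow> complex cl \<Rightarrow> complex cl" where
  "cl_inverse d eps x = (THE y. y \<in> cl_carrier d \<and>
      cl_mult d eps x y = cl_scal 1 \<and> cl_mult d eps y x = cl_scal 1)"

definition tilde_Ad :: "nat \<Rightarrow> (nat \<Rightarrow> real) \<Rightarrow> complex cl \<Rightarrow> complex cl \<Rightarrow> complex cl" where
  "tilde_Ad d eps x y = cl_mult d eps (cl_mult d eps (cl_par x) y) (cl_inverse d eps x)"

definition clifford_group :: "nat \<Rightarrow> (nat \<Rightarrow> real) \<Rightarrow> complex cl set" where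
  "clifford_group d eps = {x \<in> cl_units d eps.
      tilde_Ad d eps x ` (cl_complexify ` cl_vecs d) = cl_complexify ` cl_vecs d}"

definition special_clifford_group :: "nat \<Rightarrow> (nat \<Rightarrow> real) \<Rightarrow> complex cl set" where
  "special_clifford_group d eps = clifford_group d eps \<inter> cl_even d"

text \<open>Spin^c = kernel of |N| on Gamma^s (N takes scalar values there).\<close>
definition spinc :: "nat \<Rightarrow> (nat \<Rightarrow> real) \<Rightarrow> complex cl set" where
  "spinc d eps = {x \<in> special_clifford_group d eps.
      \<exists>c. cl_N d eps x = cl_scal c \<and> cmod c = 1}"

definition spinc_times_Cx :: "nat \<Rightarrow> (nat \<Rightarrow> real) \<Rightarrow> complex cl set" where
  "spinc_times_Cx d eps = {cl_mult d eps s (cl_scal c) | s c. s \<in> spinc d eps \<and> c \<noteq> 0}"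

definition is_cl_rep :: "nat \<Rightarrow> (nat \<Rightarrow> real) \<Rightarrow> nat \<Rightarrow> (real cl \<Rightarrow> complex mat) \<Rightarrow> bool" where
  "is_cl_rep d eps n g \<longleftrightarrow>
     (\<forall>x \<in> cl_carrier d. g x \<in> carrier_mat n n) \<and>
     g (cl_scal 1) = 1\<^sub>m n \<and>
     (\<forall>x \<in> cl_carrier d. \<forall>y \<in> cl_carrier d. g (\<lambda>A. x A + y A) = g x + g y) \<and>
     (\<forall>r. \<forall>x \<in> cl_carrier d. g (\<lambda>A. r * x A) = complex_of_real r \<cdot>\<^sub>m g x) \<and>
     (\<forall>x \<in> cl_carrier d. \<forall>y \<in> cl_carrier d. g (cl_mult d eps x y) = g x * g y)"

definition is_subspace_vec :: "nat \<Rightarrow> complex vec set \<Rightarrow> bool" where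
  "is_subspace_vec n W \<longleftrightarrow> W \<subseteq> carrier_vec n \<and> 0\<^sub>v n \<in> W \<and>
     (\<forall>v \<in> W. \<forall>w \<in> W. v + w \<in> W) \<and> (\<forall>c. \<forall>v \<in> W. c \<cdot>\<^sub>v v \<in> W)"

definition irreducible_cl_rep :: "nat \<Rightarrow> (nat \<Rightarrow> real) \<Rightarrow> nat \<Rightarrow> (real cl \<Rightarrow> complex mat) \<Rightarrow> bool" where
  "irreducible_cl_rep d eps n g \<longleftrightarrow> n > 0 \<and>
     (\<forall>W. is_subspace_vec n W \<and> (\<forall>x \<in> cl_carrier d. \<forall>w \<in> W. g x *\<^sub>v w \<in> W)
        \<longrightarrow> W = {0\<^sub>v n} \<or> W = carrier_vec n)"

definition gammaC :: "nat \<Rightarrow> nat \<Rightarrow> (real cl \<Rightarrow> complex mat) \<Rightarrow> complex cl \<Rightarrow> complex mat" where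
  "gammaC d n g x = mat n n (\<lambda>(i,j). \<Sum>A\<in>Pow {..<d}. x A * g (cl_basis A) $$ (i,j))"

definition lipschitz_group :: "nat \<Rightarrow> nat \<Rightarrow> (real cl \<Rightarrow> complex mat) \<Rightarrow> complex mat set" where
  "lipschitz_group d n g = {\<phi> \<in> carrier_mat n n. \<exists>\<psi> \<in> carrier_mat n n.
      \<phi> * \<psi> = 1\<^sub>m n \<and> \<psi> * \<phi> = 1\<^sub>m n \<and>
      (\<lambda>v. \<phi> * g v * \<psi>) ` cl_vecs d = g ` cl_vecs d}"

text \<open>Matrices embedded into a function space (for the Euclidean/product topology).\<close>
definition mat_to_fun :: "nat \<Rightarrow> complex mat \<Rightarrow> (nat \<times> nat \<Rightarrow> complex)" where
  "mat_to_fun n M = (\<lambda>(i,j). if i < n \<and> j < n then M $$ (i,j) else 0)"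

end

theory Submission
  imports Defs "Jordan_Normal_Form.Spectral_Radius"
begin

lemma neg1_pow_eq: "even (m + k) \<Longrightarrow> (-1::'a::ring_1)^m = (-1)^k"
  by (metis (no_types, lifting) even_add neg_one_even_power neg_one_odd_power)

lemma card_symdiff_parity:
  assumes "finite X" "finite Y"
  shows "even (card ((X - Y) \<union> (Y - X)) + card X + card Y)"
proof -
  have a: "card ((X - Y) \<union> (Y - X)) = card (X - Y) + card (Y - X)"
    by (rule card_Un_disjoint) (use assms in auto)
  have b: "card (X - Y) + card (X \<inter> Y) = card X"
    using card_Int_Diff[OF assms(1), of Y] by simp
  have c: "card (Y - X) + card (X \<inter> Y) = card Y"
    using card_Int_Diff[OF assms(2), of X] by (simp add: Int_commute)
  show ?thesis using a b c by presburger
qed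

definition inv_set :: "nat set \<Rightarrow> nat set \<Rightarrow> (nat \<times> nat) set" where
  "inv_set A B = {(a,b). a \<in> A \<and> b \<in> B \<and> b < a}"

lemma inv_set_finite: "finite A \<Longrightarrow> finite B \<Longrightarrow> finite (inv_set A B)"
  unfolding inv_set_def by (rule finite_subset[of _ "A \<times> B"]) auto

lemma inv_set_sd_left: "inv_set ((A - B) \<union> (B - A)) E = (inv_set A E - inv_set B E) \<union> (inv_set B E - inv_set A E)"
  unfolding inv_set_def by auto
lemma inv_set_sd_right: "inv_set A ((B - E) \<union> (E - B)) = (inv_set A B - inv_set A E) \<union> (inv_set A E - inv_set A B)"
  unfolding inv_set_def by auto

lemma cl_sign_alt: "cl_sign eps A B = (-1) ^ card (inv_set A B) * (\<Prod>i\<in>A \<inter> B. eps i)"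
  unfolding cl_sign_def inv_set_def by simp

lemma cl_sign_cocycle:
  assumes "finite A" "finite B" "finite E"
  shows "cl_sign eps A B * cl_sign eps ((A - B) \<union> (B - A)) E
       = cl_sign eps A ((B - E) \<union> (E - B)) * cl_sign eps B E"
proof -
  have fin: "finite (inv_set X Y)" if "X \<in> {A,B,E}" "Y \<in> {A,B,E}" for X Y
    using that assms inv_set_finite by auto
  have p1: "even (card (inv_set ((A - B) \<union> (B - A)) E) + card (inv_set A E) + card (inv_set B E))"
    unfolding inv_set_sd_left by (rule card_symdiff_parity) (use fin in auto)
  have p2: "even (card (inv_set A ((B - E) \<union> (E - B))) + card (inv_set A B) + card (inv_set A E))"
    unfolding inv_set_sd_right by (rule card_symdiff_parity) (use fin in auto)
  have sg: "(-1::real) ^ card (inv_set A B) * (-1) ^ card (inv_set ((A - B) \<union> (B - A)) E)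
     = (-1) ^ card (inv_set A ((B - E) \<union> (E - B))) * (-1) ^ card (inv_set B E)"
    unfolding power_add[symmetric] by (rule neg1_pow_eq) (use p1 p2 in presburger)
  have e1: "(\<Prod>i\<in>A \<inter> B. eps i) * (\<Prod>i\<in>((A - B) \<union> (B - A)) \<inter> E. eps i)
      = (\<Prod>i\<in>(A \<inter> B) \<union> (((A - B) \<union> (B - A)) \<inter> E). eps i)"
    by (rule prod.union_disjoint[symmetric]) (use assms in auto)
  have e2: "(\<Prod>i\<in>A \<inter> ((B - E) \<union> (E - B)). eps i) * (\<Prod>i\<in>B \<inter> E. eps i)
      = (\<Prod>i\<in>(A \<inter> ((B - E) \<union> (E - B))) \<union> (B \<inter> E). eps i)"
    by (rule prod.union_disjoint[symmetric]) (use assms in auto)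
  have se: "(A \<inter> B) \<union> (((A - B) \<union> (B - A)) \<inter> E) = (A \<inter> ((B - E) \<union> (E - B))) \<union> (B \<inter> E)"
    by blast
  show ?thesis
    proof -
    let ?a = "(-1::real) ^ card (inv_set A B)" and ?b = "(-1::real) ^ card (inv_set ((A - B) \<union> (B - A)) E)"
    let ?c = "(-1::real) ^ card (inv_set A ((B - E) \<union> (E - B)))" and ?e = "(-1::real) ^ card (inv_set B E)"
    have "?a * (\<Prod>i\<in>A \<inter> B. eps i) * (?b * (\<Prod>i\<in>((A - B) \<union> (B - A)) \<inter> E. eps i))
       = (?a * ?b) * ((\<Prod>i\<in>A \<inter> B. eps i) * (\<Prod>i\<in>((A - B) \<union> (B - A)) \<inter> E. eps i))"
      by (simp only: ac_simps)
    also have "\<dots> = (?c * ?e) * ((\<Prod>i\<in>A \<inter> ((B - E) \<union> (E - B)). eps i) * (\<Prod>i\<in>B \<inter> E. eps i))"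
      using sg e1 e2 se by simp
    also have "\<dots> = ?c * (\<Prod>i\<in>A \<inter> ((B - E) \<union> (E - B)). eps i) * (?e * (\<Prod>i\<in>B \<inter> E. eps i))"
      by (simp only: ac_simps)
    finally show ?thesis unfolding cl_sign_alt .
  qed
qed

lemma sum_collapse_sd:
  assumes "finite P" "\<And>A B. A \<in> P \<Longrightarrow> B \<in> P \<Longrightarrow> sym_diff A B \<in> P"
  shows "(\<Sum>D\<in>P. \<Sum>A\<in>P. \<Sum>B\<in>P. (if sym_diff A B = D then h A B D else (0::'a::comm_monoid_add)))
       = (\<Sum>A\<in>P. \<Sum>B\<in>P. h A B (sym_diff A B))"
proof -
  have "(\<Sum>D\<in>P. \<Sum>A\<in>P. \<Sum>B\<in>P. (if sym_diff A B = D then h A B D else 0))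
      = (\<Sum>A\<in>P. \<Sum>D\<in>P. \<Sum>B\<in>P. (if sym_diff A B = D then h A B D else 0))"
    by (rule sum.swap)
  also have "\<dots> = (\<Sum>A\<in>P. \<Sum>B\<in>P. \<Sum>D\<in>P. (if sym_diff A B = D then h A B D else 0))"
    by (rule sum.cong[OF refl], rule sum.swap)
  also have "\<dots> = (\<Sum>A\<in>P. \<Sum>B\<in>P. h A B (sym_diff A B))"
    by (rule sum.cong[OF refl], rule sum.cong[OF refl]) (use assms in \<open>simp add: sum.delta\<close>)
  finally show ?thesis .
qed

context fixes d :: nat and eps :: "nat \<Rightarrow> real"
begin

abbreviation "PP \<equiv> Pow {..<d}"

lemma PP_finite: "finite PP" by simp

lemma sd_PP: "A \<in> PP \<Longrightarrow> B \<in> PP \<Longrightarrow> sym_diff A B \<in> PP" by auto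

lemma mult_carrier: "cl_mult d eps x y \<in> cl_carrier d"
  unfolding cl_carrier_def cl_mult_def by auto

lemma mult_apply: "C \<subseteq> {..<d} \<Longrightarrow> cl_mult d eps x y C = (\<Sum>A\<in>PP. \<Sum>B\<in>PP.
        if sym_diff A B = C then of_real (cl_sign eps A B) * x A * y B else 0)"
  unfolding cl_mult_def by simp

lemma mult_out: "\<not> C \<subseteq> {..<d} \<Longrightarrow> cl_mult d eps x y C = 0"
  unfolding cl_mult_def by simp

lemma mult_assoc_left:
  fixes x y z :: "complex cl"
  assumes C: "C \<subseteq> {..<d}"
  shows "cl_mult d eps (cl_mult d eps x y) z C = (\<Sum>A\<in>PP. \<Sum>B\<in>PP. \<Sum>E\<in>PP.
     if sym_diff (sym_diff A B) E = C then of_real (cl_sign eps A B * cl_sign eps (sym_diff A B) E) * x A * y B * z E else 0)" (is "_ = ?rhs")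
proof -
  have "cl_mult d eps (cl_mult d eps x y) z C = (\<Sum>D\<in>PP. \<Sum>E\<in>PP.
        if sym_diff D E = C then of_real (cl_sign eps D E) * cl_mult d eps x y D * z E else 0)"
    using C by (rule mult_apply)
  also have "\<dots> = (\<Sum>E\<in>PP. \<Sum>D\<in>PP.
        if sym_diff D E = C then of_real (cl_sign eps D E) * cl_mult d eps x y D * z E else 0)"
    by (rule sum.swap)
  also have "\<dots> = (\<Sum>E\<in>PP. \<Sum>D\<in>PP. \<Sum>A\<in>PP. \<Sum>B\<in>PP. if sym_diff A B = D then
        (if sym_diff D E = C then of_real (cl_sign eps D E) * (of_real (cl_sign eps A B) * x A * y B) * z E else 0) else 0)"
    apply (rule sum.cong[OF refl], rule sum.cong[OF refl])
    apply (subst mult_apply, simp)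
    apply (auto simp: sum_distrib_left sum_distrib_right intro!: sum.cong)
    done
  also have "\<dots> = (\<Sum>E\<in>PP. \<Sum>A\<in>PP. \<Sum>B\<in>PP.
        (if sym_diff (sym_diff A B) E = C then of_real (cl_sign eps (sym_diff A B) E) * (of_real (cl_sign eps A B) * x A * y B) * z E else 0))"
    by (rule sum.cong[OF refl], rule sum_collapse_sd) auto
  also have "\<dots> = (\<Sum>A\<in>PP. \<Sum>B\<in>PP. \<Sum>E\<in>PP.
        (if sym_diff (sym_diff A B) E = C then of_real (cl_sign eps (sym_diff A B) E) * (of_real (cl_sign eps A B) * x A * y B) * z E else 0))"
    by (subst sum.swap, rule sum.cong[OF refl], rule sum.swap)
  also have "\<dots> = ?rhs"
    by (intro sum.cong refl) (simp add: algebra_simps)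
  finally show ?thesis .
qed

lemma mult_assoc_right:
  fixes x y z :: "complex cl"
  assumes C: "C \<subseteq> {..<d}"
  shows "cl_mult d eps x (cl_mult d eps y z) C = (\<Sum>A\<in>PP. \<Sum>B\<in>PP. \<Sum>E\<in>PP.
     if sym_diff A (sym_diff B E) = C then of_real (cl_sign eps A (sym_diff B E) * cl_sign eps B E) * x A * y B * z E else 0)" (is "_ = ?rhs")
proof -
  have "cl_mult d eps x (cl_mult d eps y z) C = (\<Sum>A\<in>PP. \<Sum>D\<in>PP.
        if sym_diff A D = C then of_real (cl_sign eps A D) * x A * cl_mult d eps y z D else 0)"
    using C by (rule mult_apply)
  also have "\<dots> = (\<Sum>A\<in>PP. \<Sum>D\<in>PP. \<Sum>B\<in>PP. \<Sum>E\<in>PP. if sym_diff B E = D then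
        (if sym_diff A D = C then of_real (cl_sign eps A D) * x A * (of_real (cl_sign eps B E) * y B * z E) else 0) else 0)"
    apply (rule sum.cong[OF refl], rule sum.cong[OF refl])
    apply (subst mult_apply, simp)
    apply (auto simp: sum_distrib_left sum_distrib_right intro!: sum.cong)
    done
  also have "\<dots> = (\<Sum>A\<in>PP. \<Sum>B\<in>PP. \<Sum>E\<in>PP.
        (if sym_diff A (sym_diff B E) = C then of_real (cl_sign eps A (sym_diff B E)) * x A * (of_real (cl_sign eps B E) * y B * z E) else 0))"
    by (rule sum.cong[OF refl], rule sum_collapse_sd) auto
  also have "\<dots> = ?rhs"
    by (intro sum.cong refl) (simp add: algebra_simps)
  finally show ?thesis .
qed

lemma mult_assoc:
  fixes x y z :: "complex cl"
  shows "cl_mult d eps (cl_mult d eps x y) z = cl_mult d eps x (cl_mult d eps y z)"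
proof
  fix C
  show "cl_mult d eps (cl_mult d eps x y) z C = cl_mult d eps x (cl_mult d eps y z) C"
  proof (cases "C \<subseteq> {..<d}")
    case True
    have fin: "A \<in> PP \<Longrightarrow> finite A" for A by (auto intro: finite_subset)
    show ?thesis unfolding mult_assoc_left[OF True] mult_assoc_right[OF True]
      apply (intro sum.cong refl)
      apply (subst cl_sign_cocycle)
      apply (auto intro: fin)
      apply (metis Un_Diff Un_Diff_Int sup_commute)?
      done
  qed (simp add: mult_out)
qed

end

lemma cl_sign_empty_left[simp]: "cl_sign eps {} B = 1"
  unfolding cl_sign_def by simp
lemma cl_sign_empty_right[simp]: "cl_sign eps A {} = 1"
  unfolding cl_sign_def by simp

context fixes d :: nat and eps :: "nat \<Rightarrow> real"
begin

lemma mult_gen_left: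
  fixes y :: "'a::real_algebra_1 cl"
  assumes B: "B \<subseteq> {..<d}" and C: "C \<subseteq> {..<d}"
  and xz: "\<And>A. A \<noteq> B \<Longrightarrow> x A = 0"
  shows "cl_mult d eps x y C = of_real (cl_sign eps B (sym_diff B C)) * x B * y (sym_diff B C)"
proof -
  have "cl_mult d eps x y C = (\<Sum>A\<in>PP d. \<Sum>B'\<in>PP d.
        if sym_diff A B' = C then of_real (cl_sign eps A B') * x A * y B' else 0)"
    using C by (rule mult_apply)
  also have "\<dots> = (\<Sum>A\<in>PP d. if A = B then (\<Sum>B'\<in>PP d.
        if B' = sym_diff B C then of_real (cl_sign eps B B') * x B * y B' else 0) else 0)"
    apply (intro sum.cong refl)
    subgoal for A
    proof (cases "A = B")
      case True
      have "\<And>B'. (sym_diff B B' = C) = (B' = sym_diff B C)" by blast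
      then show ?thesis using True by simp
    qed (use xz in simp)
    done
  also have "\<dots> = of_real (cl_sign eps B (sym_diff B C)) * x B * y (sym_diff B C)"
    using B C by (auto simp: sum.delta' sum.delta)
  finally show ?thesis .
qed

lemma mult_gen_right:
  fixes x :: "'a::real_algebra_1 cl"
  assumes B: "B \<subseteq> {..<d}" and C: "C \<subseteq> {..<d}"
  and yz: "\<And>A. A \<noteq> B \<Longrightarrow> y A = 0"
  shows "cl_mult d eps x y C = of_real (cl_sign eps (sym_diff C B) B) * x (sym_diff C B) * y B"
proof -
  have "cl_mult d eps x y C = (\<Sum>A\<in>PP d. \<Sum>B'\<in>PP d.
        if sym_diff A B' = C then of_real (cl_sign eps A B') * x A * y B' else 0)"
    using C by (rule mult_apply)
  also have "\<dots> = (\<Sum>A\<in>PP d. if A = sym_diff C B then (\<Sum>B'\<in>PP d.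
        if B' = B then of_real (cl_sign eps A B) * x A * y B else 0) else 0)"
    apply (intro sum.cong refl)
    subgoal for A
    proof (cases "A = sym_diff C B")
      case True
      have "\<And>B'. (sym_diff A B' = C) = (B' = B)" using True by blast
      then show ?thesis using True by (auto intro!: sum.cong simp: yz)
    next
      case False
      have "\<And>B'. (sym_diff A B' = C) \<Longrightarrow> B' \<noteq> B" using False by blast
      then show ?thesis using False yz by (auto intro!: sum.neutral)
    qed
    done
  also have "\<dots> = of_real (cl_sign eps (sym_diff C B) B) * x (sym_diff C B) * y B"
    using B C by (auto simp: sum.delta' sum.delta)
  finally show ?thesis .
qed

lemma mult_basis_left:
  fixes y :: "'a::real_algebra_1 cl"
  assumes B: "B \<subseteq> {..<d}" and C: "C \<subseteq> {..<d}"
  shows "cl_mult d eps (cl_basis B) y C = of_real (cl_sign eps B (sym_diff B C)) * y (sym_diff B C)"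
  using mult_gen_left[OF B C, of "cl_basis B" y] by (simp add: cl_basis_def)

lemma mult_basis_right:
  fixes x :: "'a::real_algebra_1 cl"
  assumes B: "B \<subseteq> {..<d}" and C: "C \<subseteq> {..<d}"
  shows "cl_mult d eps x (cl_basis B) C = of_real (cl_sign eps (sym_diff C B) B) * x (sym_diff C B)"
  using mult_gen_right[OF B C, of "cl_basis B" x] by (simp add: cl_basis_def)

lemma mult_basis:
  assumes A: "A \<subseteq> {..<d}" and B: "B \<subseteq> {..<d}"
  shows "cl_mult d eps (cl_basis A) (cl_basis B) = (\<lambda>C. if C = sym_diff A B then of_real (cl_sign eps A B) else (0::'a::real_algebra_1))"
proof
  fix C
  show "cl_mult d eps (cl_basis A) (cl_basis B) C = (if C = sym_diff A B then of_real (cl_sign eps A B) else (0::'a))"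
  proof (cases "C \<subseteq> {..<d}")
    case True
    have e: "sym_diff A C = B \<longleftrightarrow> C = sym_diff A B" by blast
    show ?thesis
    proof (cases "C = sym_diff A B")
      case True2: True
      then have "sym_diff A C = B" by blast
      then show ?thesis using mult_basis_left[OF A True, of "cl_basis B"] True2
        by (simp add: cl_basis_def)
    next
      case False2: False
      then have "sym_diff A C \<noteq> B" by blast
      then show ?thesis using mult_basis_left[OF A True, of "cl_basis B"] False2
        by (simp add: cl_basis_def)
    qed
  next
    case False
    then show ?thesis using A B by (auto simp: mult_out)
  qed
qed

lemma mult_scal_left:
  fixes y :: "complex cl"
  assumes "y \<in> cl_carrier d"
  shows "cl_mult d eps (cl_scal c) y = (\<lambda>A. c * y A)"
proof
  fix C show "cl_mult d eps (cl_scal c) y C = c * y C"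
  proof (cases "C \<subseteq> {..<d}")
    case True
    show ?thesis using mult_gen_left[OF _ True, of "{}" "cl_scal c" y] by (simp add: cl_scal_def)
  next
    case False
    then show ?thesis using assms by (simp add: mult_out cl_carrier_def)
  qed
qed

lemma mult_scal_right:
  fixes y :: "complex cl"
  assumes "y \<in> cl_carrier d"
  shows "cl_mult d eps y (cl_scal c) = (\<lambda>A. c * y A)"
proof
  fix C show "cl_mult d eps y (cl_scal c) C = c * y C"
  proof (cases "C \<subseteq> {..<d}")
    case True
    show ?thesis using mult_gen_right[OF _ True, of "{}" "cl_scal c" y] by (simp add: cl_scal_def)
  next
    case False
    then show ?thesis using assms by (simp add: mult_out cl_carrier_def)
  qed
qed

lemma mult_one_left: "y \<in> cl_carrier d \<Longrightarrow> cl_mult d eps (cl_scal 1) y = (y::complex cl)"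
  by (simp add: mult_scal_left)
lemma mult_one_right: "y \<in> cl_carrier d \<Longrightarrow> cl_mult d eps y (cl_scal 1) = (y::complex cl)"
  by (simp add: mult_scal_right)

lemma if_add0: "(if P then a + b else (0::'a::comm_monoid_add)) = (if P then a else 0) + (if P then b else 0)" by simp
lemma if_diff0: "(if P then a - b else (0::'a::ab_group_add)) = (if P then a else 0) - (if P then b else 0)" by simp

lemma sum2_add: "(\<Sum>a\<in>S. \<Sum>b\<in>T. if P a b then f a b + g a b else (0::'a::comm_monoid_add))
   = (\<Sum>a\<in>S. \<Sum>b\<in>T. if P a b then f a b else 0) + (\<Sum>a\<in>S. \<Sum>b\<in>T. if P a b then g a b else 0)"
  by (simp only: if_add0 sum.distrib)
lemma sum2_diff: "(\<Sum>a\<in>S. \<Sum>b\<in>T. if P a b then f a b - g a b else (0::'a::ab_group_add))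
   = (\<Sum>a\<in>S. \<Sum>b\<in>T. if P a b then f a b else 0) - (\<Sum>a\<in>S. \<Sum>b\<in>T. if P a b then g a b else 0)"
  by (simp only: if_diff0 sum_subtractf)

lemma mult_add_left:
  "cl_mult d eps (\<lambda>A. x A + y A) z = (\<lambda>C. cl_mult d eps x z C + cl_mult d eps y z C)"
  unfolding cl_mult_def by (rule ext) (simp only: distrib_left distrib_right if_add0 sum.distrib)

lemma mult_add_right:
  "cl_mult d eps z (\<lambda>A. x A + y A) = (\<lambda>C. cl_mult d eps z x C + cl_mult d eps z y C)"
  unfolding cl_mult_def by (rule ext) (simp only: distrib_left distrib_right if_add0 sum.distrib)

lemma mult_diff_left:
  "cl_mult d eps (\<lambda>A. x A - y A) z = (\<lambda>C. cl_mult d eps x z C - cl_mult d eps y z C)"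
  unfolding cl_mult_def by (rule ext) (simp only: left_diff_distrib right_diff_distrib if_diff0 sum_subtractf)

lemma mult_diff_right:
  "cl_mult d eps z (\<lambda>A. x A - y A) = (\<lambda>C. cl_mult d eps z x C - cl_mult d eps z y C)"
  unfolding cl_mult_def by (rule ext) (simp only: left_diff_distrib right_diff_distrib if_diff0 sum_subtractf)

lemma mult_smult_left:
  fixes x z :: "complex cl"
  shows "cl_mult d eps (\<lambda>A. c * x A) z = (\<lambda>C. c * cl_mult d eps x z C)"
  unfolding cl_mult_def by (auto simp: algebra_simps sum_distrib_left intro!: ext sum.cong)

lemma mult_smult_right:
  fixes x z :: "complex cl"
  shows "cl_mult d eps z (\<lambda>A. c * x A) = (\<lambda>C. c * cl_mult d eps z x C)"
  unfolding cl_mult_def by (auto simp: algebra_simps sum_distrib_left intro!: ext sum.cong)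

lemma mult_zero_left: "cl_mult d eps (\<lambda>A. 0) z = (\<lambda>C. 0::complex)"
  unfolding cl_mult_def by auto
lemma mult_zero_right: "cl_mult d eps z (\<lambda>A. 0) = (\<lambda>C. 0::complex)"
  unfolding cl_mult_def by auto

lemma inverse_unique:
  fixes x y z :: "complex cl"
  assumes "y \<in> cl_carrier d" "z \<in> cl_carrier d"
    "cl_mult d eps y x = cl_scal 1" "cl_mult d eps x z = cl_scal 1"
  shows "y = z"
proof -
  have "y = cl_mult d eps y (cl_scal 1)" using assms by (simp add: mult_one_right)
  also have "\<dots> = cl_mult d eps y (cl_mult d eps x z)" using assms(4) by simp
  also have "\<dots> = cl_mult d eps (cl_mult d eps y x) z" by (simp add: mult_assoc)
  also have "\<dots> = cl_mult d eps (cl_scal 1) z" using assms(3) by simp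
  also have "\<dots> = z" using assms by (simp add: mult_one_left)
  finally show ?thesis .
qed

lemma units_inverse:
  assumes "x \<in> cl_units d eps"
  shows "cl_inverse d eps x \<in> cl_carrier d"
    "cl_mult d eps x (cl_inverse d eps x) = cl_scal 1"
    "cl_mult d eps (cl_inverse d eps x) x = cl_scal 1"
proof -
  obtain y where y: "y \<in> cl_carrier d" "cl_mult d eps x y = cl_scal 1" "cl_mult d eps y x = cl_scal 1"
    using assms unfolding cl_units_def by auto
  have "cl_inverse d eps x = y"
    unfolding cl_inverse_def
    apply (rule the_equality)
    using y apply simp
    using y inverse_unique by blast
  then show "cl_inverse d eps x \<in> cl_carrier d"
    "cl_mult d eps x (cl_inverse d eps x) = cl_scal 1"
    "cl_mult d eps (cl_inverse d eps x) x = cl_scal 1" using y by auto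
qed

lemma inverse_eq:
  assumes "y \<in> cl_carrier d" "cl_mult d eps x y = cl_scal 1" "cl_mult d eps y x = cl_scal 1"
  shows "cl_inverse d eps x = y"
  unfolding cl_inverse_def
  apply (rule the_equality)
  using assms apply simp
  using assms inverse_unique by blast

end

lemma inv_sum:
  assumes "finite A" "finite B"
  shows "card (inv_set A B) + card (inv_set B A) + card (A \<inter> B) = card A * card B"
proof -
  have U: "A \<times> B = (inv_set A B \<union> (\<lambda>(b,a). (a,b)) ` inv_set B A) \<union> (\<lambda>a. (a,a)) ` (A \<inter> B)"
    unfolding inv_set_def by (auto simp: image_iff)
  have f1: "finite (inv_set A B)" "finite (inv_set B A)" using assms inv_set_finite by auto
  have c2: "card ((\<lambda>(b,a). (a,b)) ` inv_set B A) = card (inv_set B A)"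
    by (rule card_image) (auto simp: inj_on_def)
  have c3: "card ((\<lambda>a. (a,a)) ` (A \<inter> B)) = card (A \<inter> B)"
    by (rule card_image) (auto simp: inj_on_def)
  have "card (A \<times> B) = card (inv_set A B \<union> (\<lambda>(b,a). (a,b)) ` inv_set B A) + card ((\<lambda>a. (a,a)) ` (A \<inter> B))"
    unfolding U by (rule card_Un_disjoint) (use f1 assms in \<open>auto simp: inv_set_def\<close>)
  also have "card (inv_set A B \<union> (\<lambda>(b,a). (a,b)) ` inv_set B A) = card (inv_set A B) + card (inv_set B A)"
    unfolding c2[symmetric] by (rule card_Un_disjoint) (use f1 in \<open>auto simp: inv_set_def\<close>)
  finally show ?thesis using c3 by (simp add: card_cartesian_product)
qed

lemma cl_sign_swap:
  assumes "finite A" "finite B"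
  shows "cl_sign eps A B = (-1) ^ (card A * card B + card (A \<inter> B)) * cl_sign eps B A"
proof -
  have e: "(-1::real) ^ card (inv_set A B) = (-1) ^ (card A * card B + card (A \<inter> B)) * (-1) ^ card (inv_set B A)"
    unfolding power_add[symmetric] by (rule neg1_pow_eq) (use inv_sum[OF assms] in presburger)
  show ?thesis unfolding cl_sign_alt e by (simp add: Int_commute)
qed

lemma cl_sign_single_in:
  assumes "finite B" "j \<in> B" "even (card B)"
  shows "cl_sign eps {j} B = - cl_sign eps B {j}"
  using cl_sign_swap[OF _ assms(1), of "{j}" eps] assms by (simp add: Int_absorb2)

lemma cl_sign_single_full:
  assumes "odd d" "j < d"
  shows "cl_sign eps {j} {..<d} = cl_sign eps {..<d} {j}"
proof -
  have "{j} \<inter> {..<d} = {j}" using assms by auto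
  then show ?thesis using cl_sign_swap[of "{j}" "{..<d}" eps] assms by simp
qed

lemma cl_sign_nz:
  assumes "\<forall>i<d. eps i \<noteq> 0" "A \<subseteq> {..<d}" "B \<subseteq> {..<d}"
  shows "cl_sign eps A B \<noteq> 0"
  unfolding cl_sign_def using assms finite_subset[OF _ finite_lessThan]
  by (auto simp: prod_zero_iff)

definition tri :: "nat \<Rightarrow> nat" where "tri k = k * (k - 1) div 2"

lemma tri_Suc: "tri (Suc n) = tri n + n"
  unfolding tri_def by (cases n) (auto simp: algebra_simps)

lemma tri_add: "tri (x + y) = tri x + tri y + x * y"
  by (induct y) (auto simp: tri_Suc tri_def[of 0] algebra_simps)

lemma tri_parity:
  assumes "c \<le> a" "c \<le> b"
  shows "even (tri (a + b - 2 * c) + a * b + c + tri a + tri b)"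
proof -
  obtain p q where a: "a = c + p" and b: "b = c + q" using assms by (metis le_add_diff_inverse)
  have k: "a + b - 2 * c = p + q" using a b by simp
  have eq: "tri (a + b - 2 * c) + a * b + c + tri a + tri b
     = 2 * (tri p + tri q + p * q + c * p + c * q + tri c) + (c * c + c)"
    unfolding k a b tri_add by (simp add: algebra_simps tri_add)
  have ev: "even (c * c + c)" by simp
  show ?thesis unfolding eq using ev by (simp only: even_add even_mult_iff even_numeral simp_thms)
qed

lemma rev_sign:
  assumes "finite A" "finite B"
  shows "(-1) ^ tri (card (sym_diff A B)) * cl_sign eps A B
       = cl_sign eps B A * (-1) ^ tri (card A) * (-1) ^ tri (card B)"
proof -
  have cs: "card (sym_diff A B) = card A + card B - 2 * card (A \<inter> B)"
  proof -
    have "card (sym_diff A B) = card (A - B) + card (B - A)"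
      by (rule card_Un_disjoint) (use assms in auto)
    moreover have "card (A - B) + card (A \<inter> B) = card A" using card_Int_Diff[OF assms(1), of B] by simp
    moreover have "card (B - A) + card (A \<inter> B) = card B" using card_Int_Diff[OF assms(2), of A] by (simp add: Int_commute)
    ultimately show ?thesis by simp
  qed
  have le: "card (A \<inter> B) \<le> card A" "card (A \<inter> B) \<le> card B"
    using assms by (auto intro: card_mono)
  have "(-1::real) ^ tri (card (sym_diff A B)) * (-1) ^ (card A * card B + card (A \<inter> B))
      = (-1) ^ tri (card A) * (-1) ^ tri (card B)"
    unfolding power_add[symmetric] by (rule neg1_pow_eq) (use tri_parity[OF le] cs in \<open>simp add: algebra_simps\<close>)
  then show ?thesis unfolding cl_sign_swap[OF assms, of eps] by (simp add: algebra_simps)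
qed

definition cl_odd :: "nat \<Rightarrow> complex cl set" where
  "cl_odd d = {x \<in> cl_carrier d. \<forall>A. even (card A) \<longrightarrow> x A = 0}"

definition homog :: "bool \<Rightarrow> complex cl \<Rightarrow> bool" where
  "homog p x \<longleftrightarrow> (\<forall>A. x A \<noteq> 0 \<longrightarrow> finite A \<and> odd (card A) = p)"

lemma even_homog: "x \<in> cl_even d \<Longrightarrow> homog False x"
  unfolding cl_even_def homog_def cl_carrier_def
  by (auto intro: finite_subset[OF _ finite_lessThan])

lemma odd_homog: "x \<in> cl_odd d \<Longrightarrow> homog True x"
  unfolding cl_odd_def homog_def cl_carrier_def
  by (auto intro: finite_subset[OF _ finite_lessThan])

lemma homog_even: "homog False x \<Longrightarrow> x \<in> cl_carrier d \<Longrightarrow> x \<in> cl_even d"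
  unfolding cl_even_def homog_def by auto

lemma homog_odd: "homog True x \<Longrightarrow> x \<in> cl_carrier d \<Longrightarrow> x \<in> cl_odd d"
  unfolding cl_odd_def homog_def by auto

lemma card_sd_parity: "finite A \<Longrightarrow> finite B \<Longrightarrow> odd (card (sym_diff A B)) = (odd (card A) \<noteq> odd (card B))"
proof -
  assume f: "finite A" "finite B"
  have "even (card (sym_diff A B) + card A + card B)" by (rule card_symdiff_parity[OF f])
  then show ?thesis by presburger
qed

lemma mult_homog:
  assumes "homog p x" "homog q y"
  shows "homog (p \<noteq> q) (cl_mult d eps x y)"
  unfolding homog_def
proof (intro allI impI)
  fix C assume nz: "cl_mult d eps x y C \<noteq> 0"
  then have C: "C \<subseteq> {..<d}" using mult_out by blast
  have "\<exists>A\<in>PP d. \<exists>B\<in>PP d. sym_diff A B = C \<and> x A \<noteq> 0 \<and> y B \<noteq> 0"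
  proof (rule ccontr)
    assume "\<not> ?thesis"
    then have "(\<Sum>A\<in>PP d. \<Sum>B\<in>PP d. if sym_diff A B = C then of_real (cl_sign eps A B) * x A * y B else 0) = 0"
      by (intro sum.neutral ballI) auto
    with nz show False using mult_apply[OF C, of eps x y] by simp
  qed
  then obtain A B where AB:
    "A \<in> PP d" "B \<in> PP d" "sym_diff A B = C" "x A \<noteq> 0" "y B \<noteq> 0" by blast
  have fA: "finite A" "odd (card A) = p" using AB(4) assms(1) unfolding homog_def by auto
  have fB: "finite B" "odd (card B) = q" using AB(5) assms(2) unfolding homog_def by auto
  have fC: "finite C" using AB(3) fA(1) fB(1) by blast
  have "odd (card C) = (p \<noteq> q)" using card_sd_parity[OF fA(1) fB(1)] fA(2) fB(2) AB(3) by simp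
  with fC show "finite C \<and> odd (card C) = (p \<noteq> q)" by blast
qed

lemma even_mult: "x \<in> cl_even d \<Longrightarrow> y \<in> cl_even d \<Longrightarrow> cl_mult d eps x y \<in> cl_even d"
proof -
  assume a: "x \<in> cl_even d" "y \<in> cl_even d"
  have "homog False (cl_mult d eps x y)"
    using mult_homog[OF even_homog[OF a(1)] even_homog[OF a(2)]] by simp
  then show ?thesis using homog_even mult_carrier by blast
qed

lemma par_even: "x \<in> cl_even d \<Longrightarrow> cl_par x = x"
  unfolding cl_par_def cl_even_def by (rule ext, case_tac "even (card A)") auto

lemma rev_carrier: "x \<in> cl_carrier d \<Longrightarrow> cl_rev x \<in> cl_carrier d"
  unfolding cl_rev_def cl_carrier_def by auto

lemma rev_even: "x \<in> cl_even d \<Longrightarrow> cl_rev x \<in> cl_even d"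
  unfolding cl_rev_def cl_even_def cl_carrier_def by auto

lemma rev_scal1: "cl_rev (cl_scal 1) = cl_scal 1"
  unfolding cl_rev_def cl_scal_def by (auto intro!: ext)

lemma rev_vec: "v \<in> cl_vecs d \<Longrightarrow> cl_rev (cl_complexify v) = cl_complexify v"
  unfolding cl_rev_def cl_vecs_def cl_complexify_def by (rule ext, case_tac "card A = 1") auto

lemma rev_smult_real: "cl_rev (\<lambda>A. complex_of_real r * x A) = (\<lambda>A. complex_of_real r * cl_rev x A)"
  unfolding cl_rev_def by (auto intro!: ext)

lemma par_smult: "cl_par (\<lambda>A. c * x A) = (\<lambda>A. c * cl_par x A)"
  unfolding cl_par_def by (auto intro!: ext)

lemma reorder5: "(a*b*c)*(x*y) = a*(c*y)*(b*(x::'a::comm_semiring_1))" by (simp add: ac_simps)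

lemma rev_mult:
  fixes x y :: "complex cl"
  shows "cl_rev (cl_mult d eps x y) = cl_mult d eps (cl_rev y) (cl_rev x)"
proof
  fix C
  show "cl_rev (cl_mult d eps x y) C = cl_mult d eps (cl_rev y) (cl_rev x) C"
  proof (cases "C \<subseteq> {..<d}")
    case False then show ?thesis by (simp add: cl_rev_def mult_out)
  next
    case True
    have fin: "A \<in> PP d \<Longrightarrow> finite A" for A by (auto intro: finite_subset)
    have "cl_rev (cl_mult d eps x y) C = (-1) ^ tri (card C) * cnj (cl_mult d eps x y C)"
      unfolding cl_rev_def tri_def by simp
    also have "\<dots> = (\<Sum>A\<in>PP d. \<Sum>B\<in>PP d. if sym_diff A B = C then
        (-1) ^ tri (card (sym_diff A B)) * of_real (cl_sign eps A B) * cnj (x A) * cnj (y B) else 0)" (is "_ = ?thesis2")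
    proof -
      have "(-1) ^ tri (card C) * cnj (cl_mult d eps x y C) = (\<Sum>A\<in>PP d. \<Sum>B\<in>PP d. (-1) ^ tri (card C) *
          cnj (if sym_diff A B = C then of_real (cl_sign eps A B) * x A * y B else 0))"
        unfolding mult_apply[OF True] by (simp only: cnj_sum sum_distrib_left)
      also have "\<dots> = ?thesis2"
        apply (intro sum.cong refl)
        subgoal for A B by (cases "sym_diff A B = C") simp_all
        done
      finally show ?thesis .
    qed
    also have "\<dots> = (\<Sum>A\<in>PP d. \<Sum>B\<in>PP d. if sym_diff A B = C then
        of_real (cl_sign eps B A) * ((-1) ^ tri (card B) * cnj (y B)) * ((-1) ^ tri (card A) * cnj (x A)) else 0)"
    proof (intro sum.cong refl)
      fix A B assume AB: "A \<in> PP d" "B \<in> PP d"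
      have e: "(-1) ^ tri (card (sym_diff A B)) * cl_sign eps A B
       = cl_sign eps B A * (-1) ^ tri (card A) * (-1) ^ tri (card B)" using rev_sign[of A B eps] fin[OF AB(1)] fin[OF AB(2)] by simp
      have e2: "(-1) ^ tri (card (sym_diff A B)) * (of_real (cl_sign eps A B) :: complex)
       = of_real (cl_sign eps B A) * (-1) ^ tri (card A) * (-1) ^ tri (card B)"
        using arg_cong[OF e, of complex_of_real] by simp
      show "(if sym_diff A B = C then (-1) ^ tri (card (sym_diff A B)) * of_real (cl_sign eps A B) * cnj (x A) * cnj (y B) else 0)
        = (if sym_diff A B = C then of_real (cl_sign eps B A) * ((-1) ^ tri (card B) * cnj (y B)) * ((-1) ^ tri (card A) * cnj (x A)) else 0)"
      proof (cases "sym_diff A B = C")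
        case True
        have "(-1) ^ tri (card (sym_diff A B)) * of_real (cl_sign eps A B) * cnj (x A) * cnj (y B)
           = ((-1) ^ tri (card (sym_diff A B)) * of_real (cl_sign eps A B)) * (cnj (x A) * cnj (y B))" by (simp only: mult.assoc)
        also have "\<dots> = (of_real (cl_sign eps B A) * (-1) ^ tri (card A) * (-1) ^ tri (card B)) * (cnj (x A) * cnj (y B))"
          by (simp only: e2)
        also have "\<dots> = of_real (cl_sign eps B A) * ((-1) ^ tri (card B) * cnj (y B)) * ((-1) ^ tri (card A) * cnj (x A))"
          by (rule reorder5)
        finally show ?thesis unfolding if_P[OF True] .
      qed simp
    qed
    also have "\<dots> = (\<Sum>B\<in>PP d. \<Sum>A\<in>PP d. if sym_diff B A = C then
        of_real (cl_sign eps B A) * ((-1) ^ tri (card B) * cnj (y B)) * ((-1) ^ tri (card A) * cnj (x A)) else 0)"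
      by (subst sum.swap) (intro sum.cong refl; simp only: Un_commute)
    also have "\<dots> = cl_mult d eps (cl_rev y) (cl_rev x) C"
      by (simp only: mult_apply[OF True] cl_rev_def tri_def)
    finally show ?thesis .
  qed
qed

locale clf =
  fixes d :: nat and eps :: "nat \<Rightarrow> real"
  assumes eps_nz: "\<forall>i<d. eps i \<noteq> 0"
begin

abbreviation mul :: "complex cl \<Rightarrow> complex cl \<Rightarrow> complex cl" where
  "mul \<equiv> cl_mult d eps"

lemma sign_nz: "A \<subseteq> {..<d} \<Longrightarrow> B \<subseteq> {..<d} \<Longrightarrow> cl_sign eps A B \<noteq> 0"
  using cl_sign_nz eps_nz by blast

lemma center_even:
  assumes y: "y \<in> cl_even d"
    and comm: "\<forall>j<d. mul (cl_basis {j}) y = mul y (cl_basis {j})"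
  shows "y = cl_scal (y {})"
proof
  fix A
  show "y A = cl_scal (y {}) A"
  proof (cases "A = {}")
    case True then show ?thesis by (simp add: cl_scal_def)
  next
    case ne: False
    have "y A = 0"
    proof (cases "A \<subseteq> {..<d} \<and> even (card A)")
      case False
      then show ?thesis using y unfolding cl_even_def cl_carrier_def by auto
    next
      case True
      then have Ad: "A \<subseteq> {..<d}" and ev: "even (card A)" by auto
      obtain j where jA: "j \<in> A" using ne by auto
      then have jd: "j < d" using Ad by auto
      have fA: "finite A" using Ad finite_subset by blast
      define C where "C = A - {j}"
      have Cd: "C \<subseteq> {..<d}" using Ad unfolding C_def by auto
      have jd': "{j} \<subseteq> {..<d}" using jd by auto
      have e1: "sym_diff {j} C = A" using jA unfolding C_def by auto
      have e2: "sym_diff C {j} = A" using jA unfolding C_def by auto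
      have "mul (cl_basis {j}) y C = mul y (cl_basis {j}) C" using comm jd by simp
      then have "of_real (cl_sign eps {j} A) * y A = of_real (cl_sign eps A {j}) * y A"
        using mult_basis_left[OF jd' Cd, of eps y] mult_basis_right[OF jd' Cd, of eps y] e1 e2 by simp
      moreover have "cl_sign eps {j} A = - cl_sign eps A {j}"
        by (rule cl_sign_single_in[OF fA jA ev])
      moreover have "cl_sign eps A {j} \<noteq> 0" using sign_nz[OF Ad jd'] .
      ultimately show ?thesis by (simp add: algebra_simps)
    qed
    then show ?thesis using ne by (simp add: cl_scal_def)
  qed
qed

lemma basis_vec: "j < d \<Longrightarrow> (cl_basis {j} :: real cl) \<in> cl_vecs d"
  unfolding cl_vecs_def cl_carrier_def cl_basis_def by auto

lemma basis_complexify: "cl_complexify (cl_basis A) = cl_basis A"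
  unfolding cl_complexify_def cl_basis_def by auto

lemma basis_carrier: "A \<subseteq> {..<d} \<Longrightarrow> cl_basis A \<in> cl_carrier d"
  unfolding cl_carrier_def cl_basis_def by auto

lemma sgroup_D:
  assumes "x \<in> special_clifford_group d eps"
  shows "x \<in> cl_carrier d" "x \<in> cl_even d" "x \<in> cl_units d eps"
    "cl_inverse d eps x \<in> cl_carrier d"
    "mul x (cl_inverse d eps x) = cl_scal 1" "mul (cl_inverse d eps x) x = cl_scal 1"
    "tilde_Ad d eps x ` (cl_complexify ` cl_vecs d) = cl_complexify ` cl_vecs d"
  using assms units_inverse[of x d eps]
  unfolding special_clifford_group_def clifford_group_def cl_units_def by auto

lemma scal_group:
  assumes x: "x \<in> special_clifford_group d eps" and c: "c \<noteq> 0"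
  shows "(\<lambda>A. c * x A) \<in> special_clifford_group d eps"
proof -
  note X = sgroup_D[OF x]
  define xi where "xi = cl_inverse d eps x"
  define y where "y = (\<lambda>A. c * x A)"
  define yi where "yi = (\<lambda>A. inverse c * xi A)"
  have yc: "y \<in> cl_carrier d" using X(1) unfolding y_def cl_carrier_def by auto
  have yic: "yi \<in> cl_carrier d" using X(4) unfolding yi_def xi_def cl_carrier_def by auto
  have m1: "mul y yi = cl_scal 1"
    unfolding y_def yi_def mult_smult_left mult_smult_right using X(5) c unfolding xi_def
    by (auto simp: cl_scal_def)
  have m2: "mul yi y = cl_scal 1"
    unfolding y_def yi_def mult_smult_left mult_smult_right using X(6) c unfolding xi_def
    by (auto simp: cl_scal_def)
  have yu: "y \<in> cl_units d eps" using yc yic m1 m2 unfolding cl_units_def by auto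
  have inv: "cl_inverse d eps y = yi" by (rule inverse_eq[OF yic m1 m2])
  have ad: "tilde_Ad d eps y v = tilde_Ad d eps x v" for v
    unfolding tilde_Ad_def inv unfolding y_def yi_def par_smult mult_smult_left mult_smult_right xi_def
    using c by auto
  have ye: "y \<in> cl_even d" using X(2) unfolding y_def cl_even_def cl_carrier_def by auto
  show ?thesis
    unfolding special_clifford_group_def clifford_group_def
    using yu ye X(7) ad unfolding y_def[symmetric] by auto
qed

lemma N_even: "x \<in> cl_even d \<Longrightarrow> cl_N d eps x = mul (cl_rev x) x"
  unfolding cl_N_def cl_tilde_rev_def by (simp add: par_even)

lemma N_scalar:
  assumes x: "x \<in> special_clifford_group d eps"
  shows "\<exists>c. c \<noteq> 0 \<and> cl_N d eps x = cl_scal c"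
proof -
  note X = sgroup_D[OF x]
  define xi where "xi = cl_inverse d eps x"
  define N where "N = mul (cl_rev x) x"
  have xc: "x \<in> cl_carrier d" and xic: "xi \<in> cl_carrier d" using X unfolding xi_def by auto
  have rxc: "cl_rev x \<in> cl_carrier d" by (rule rev_carrier[OF xc])
  have rxic: "cl_rev xi \<in> cl_carrier d" by (rule rev_carrier[OF xic])
  have x_xi: "mul x xi = cl_scal 1" and xi_x: "mul xi x = cl_scal 1" using X unfolding xi_def by auto
  have Ne: "N \<in> cl_even d" unfolding N_def by (rule even_mult[OF rev_even[OF X(2)] X(2)])
  have comm: "\<forall>j<d. mul (cl_basis {j}) N = mul N (cl_basis {j})"
  proof (intro allI impI)
    fix j assume jd: "j < d"
    define v :: "complex cl" where "v = cl_basis {j}"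
    have vV: "v \<in> cl_complexify ` cl_vecs d" unfolding v_def using basis_vec[OF jd] basis_complexify[of "{j}"] by force
    have rv: "cl_rev v = v" unfolding v_def using rev_vec[OF basis_vec[OF jd]] basis_complexify[of "{j}"] by simp
    define w where "w = mul (mul x v) xi"
    have "w = tilde_Ad d eps x v" unfolding w_def tilde_Ad_def xi_def by (simp add: par_even[OF X(2)])
    then have "w \<in> cl_complexify ` cl_vecs d" using X(7) vV by blast
    then have rw: "cl_rev w = w" using rev_vec by blast
    have rw2: "cl_rev w = mul (cl_rev xi) (mul v (cl_rev x))"
      unfolding w_def rev_mult rv ..
    have mxv: "mul x v \<in> cl_carrier d" by (rule mult_carrier)
    have "mul N v = mul (cl_rev x) (mul x v)" unfolding N_def by (simp add: mult_assoc)
    also have "\<dots> = mul (cl_rev x) (mul (mul x v) (cl_scal 1))" using mult_one_right[OF mxv] by simp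
    also have "\<dots> = mul (cl_rev x) (mul w x)" unfolding w_def xi_x[symmetric] by (simp add: mult_assoc)
    also have "\<dots> = mul (cl_rev x) (mul (mul (cl_rev xi) (mul v (cl_rev x))) x)" using rw rw2 by simp
    also have "\<dots> = mul (mul (cl_rev x) (cl_rev xi)) (mul v N)" unfolding N_def by (simp add: mult_assoc)
    also have "mul (cl_rev x) (cl_rev xi) = cl_scal 1" using rev_mult[of d eps xi x] xi_x rev_scal1 by simp
    also have "mul (cl_scal 1) (mul v N) = mul v N" by (rule mult_one_left[OF mult_carrier])
    finally show "mul (cl_basis {j}) N = mul N (cl_basis {j})" unfolding v_def ..
  qed
  have Nsc: "N = cl_scal (N {})" by (rule center_even[OF Ne comm])
  have "mul N (mul xi (cl_rev xi)) = mul (cl_rev x) (mul (mul x xi) (cl_rev xi))"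
    unfolding N_def by (simp add: mult_assoc)
  also have "\<dots> = mul (cl_rev x) (cl_rev xi)" using x_xi mult_one_left[OF rxic] by simp
  also have "\<dots> = cl_scal 1" using rev_mult[of d eps xi x] xi_x rev_scal1 by simp
  finally have inv: "mul N (mul xi (cl_rev xi)) = cl_scal 1" .
  have "N {} \<noteq> 0"
  proof
    assume "N {} = 0"
    then have "N = (\<lambda>A. 0)" using Nsc by (simp add: cl_scal_def)
    then have "mul N (mul xi (cl_rev xi)) = (\<lambda>C. 0)" using mult_zero_left[of d eps] by simp
    then have "cl_scal 1 {} = (0::complex)" using inv by simp
    then show False by (simp add: cl_scal_def)
  qed
  then show ?thesis using Nsc N_even[OF X(2)] unfolding N_def by auto
qed

lemma part1: "special_clifford_group d eps = spinc_times_Cx d eps"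
proof
  show "special_clifford_group d eps \<subseteq> spinc_times_Cx d eps"
  proof
    fix x assume x: "x \<in> special_clifford_group d eps"
    note X = sgroup_D[OF x]
    obtain c where c: "c \<noteq> 0" "cl_N d eps x = cl_scal c" using N_scalar[OF x] by auto
    define r where "r = 1 / sqrt (cmod c)"
    have r0: "r > 0" unfolding r_def using c by auto
    have rr: "r * r * cmod c = 1" unfolding r_def using c
      by (simp add: field_simps)
    define s where "s = (\<lambda>A. complex_of_real r * x A)"
    have sG: "s \<in> special_clifford_group d eps" unfolding s_def by (rule scal_group[OF x]) (use r0 in simp)
    have se: "s \<in> cl_even d" using sgroup_D(2)[OF sG] .
    have "cl_N d eps s = mul (cl_rev s) s" by (rule N_even[OF se])
    also have "\<dots> = (\<lambda>C. complex_of_real r * (complex_of_real r * cl_N d eps x C))"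
      unfolding s_def rev_smult_real mult_smult_left mult_smult_right N_even[OF X(2)] ..
    also have "\<dots> = cl_scal (complex_of_real (r * r) * c)"
      unfolding c(2) by (auto simp: cl_scal_def)
    finally have Ns: "cl_N d eps s = cl_scal (complex_of_real (r * r) * c)" .
    have "cmod (complex_of_real (r * r) * c) = 1" using rr r0 by (simp add: norm_mult abs_mult)
    then have sS: "s \<in> spinc d eps" unfolding spinc_def using sG Ns by auto
    have "mul s (cl_scal (complex_of_real (1 / r))) = (\<lambda>A. complex_of_real (1/r) * s A)"
      by (rule mult_scal_right[OF sgroup_D(1)[OF sG]])
    also have "\<dots> = x" unfolding s_def using r0 by (auto simp: of_real_mult[symmetric] simp del: of_real_mult)
    finally have "x = mul s (cl_scal (complex_of_real (1 / r)))" ..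
    moreover have "complex_of_real (1 / r) \<noteq> 0" using r0 by simp
    ultimately show "x \<in> spinc_times_Cx d eps" unfolding spinc_times_Cx_def using sS by blast
  qed
next
  show "spinc_times_Cx d eps \<subseteq> special_clifford_group d eps"
  proof
    fix y assume "y \<in> spinc_times_Cx d eps"
    then obtain s c where y: "y = mul s (cl_scal c)" "s \<in> spinc d eps" "c \<noteq> 0"
      unfolding spinc_times_Cx_def by auto
    have sG: "s \<in> special_clifford_group d eps" using y(2) unfolding spinc_def by auto
    have "y = (\<lambda>A. c * s A)" using y(1) mult_scal_right[OF sgroup_D(1)[OF sG]] by simp
    then show "y \<in> special_clifford_group d eps" using scal_group[OF sG y(3)] by simp
  qed
qed

end

lemma mult_entry:
  assumes "A \<in> carrier_mat n n" "B \<in> carrier_mat n n" "i < n" "j < n"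
  shows "(A * B) $$ (i,j) = (\<Sum>k<n. A $$ (i,k) * B $$ (k,j))"
  using assms by (simp add: scalar_prod_def atLeast0LessThan)

locale clrep = clf +
  fixes n :: nat and g :: "real cl \<Rightarrow> complex mat"
  assumes rep: "is_cl_rep d eps n g"
    and irr: "irreducible_cl_rep d eps n g"
    and odd_d: "odd d"
begin

definition G :: "nat set \<Rightarrow> complex mat" where "G A = g (cl_basis A)"

abbreviation gC :: "complex cl \<Rightarrow> complex mat" where "gC \<equiv> gammaC d n g"

lemma n_pos: "n > 0" using irr unfolding irreducible_cl_rep_def by auto

lemma g_carrier: "x \<in> cl_carrier d \<Longrightarrow> g x \<in> carrier_mat n n"
  using rep unfolding is_cl_rep_def by auto
lemma g_one: "g (cl_scal 1) = 1\<^sub>m n"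
  using rep unfolding is_cl_rep_def by auto
lemma g_add: "x \<in> cl_carrier d \<Longrightarrow> y \<in> cl_carrier d \<Longrightarrow> g (\<lambda>A. x A + y A) = g x + g y"
  using rep unfolding is_cl_rep_def by auto
lemma g_smult: "x \<in> cl_carrier d \<Longrightarrow> g (\<lambda>A. r * x A) = complex_of_real r \<cdot>\<^sub>m g x"
  using rep unfolding is_cl_rep_def by auto
lemma g_mult: "x \<in> cl_carrier d \<Longrightarrow> y \<in> cl_carrier d \<Longrightarrow> g (cl_mult d eps x y) = g x * g y"
  using rep unfolding is_cl_rep_def by auto

lemma rbasis_carrier: "A \<subseteq> {..<d} \<Longrightarrow> (cl_basis A :: real cl) \<in> cl_carrier d"
  unfolding cl_carrier_def cl_basis_def by auto

lemma G_carrier: "A \<subseteq> {..<d} \<Longrightarrow> G A \<in> carrier_mat n n"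
  unfolding G_def by (rule g_carrier[OF rbasis_carrier])

lemma G_smult_index: "A \<subseteq> {..<d} \<Longrightarrow> i < n \<Longrightarrow> j < n \<Longrightarrow> (c \<cdot>\<^sub>m G A) $$ (i,j) = c * G A $$ (i,j)"
  using G_carrier[of A] by auto

lemma G_empty: "G {} = 1\<^sub>m n"
proof -
  have "(cl_basis {} :: real cl) = cl_scal 1" unfolding cl_basis_def cl_scal_def by auto
  then show ?thesis unfolding G_def using g_one by simp
qed

lemma G_mult:
  assumes A: "A \<subseteq> {..<d}" and B: "B \<subseteq> {..<d}"
  shows "G A * G B = complex_of_real (cl_sign eps A B) \<cdot>\<^sub>m G (sym_diff A B)"
proof -
  have "cl_mult d eps (cl_basis A) (cl_basis B) = (\<lambda>C. cl_sign eps A B * (cl_basis (sym_diff A B) :: real cl) C)"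
    unfolding mult_basis[OF A B] by (auto simp: cl_basis_def)
  moreover have "sym_diff A B \<subseteq> {..<d}" using A B by auto
  ultimately show ?thesis
    unfolding G_def using g_mult[OF rbasis_carrier[OF A] rbasis_carrier[OF B]] g_smult[OF rbasis_carrier] by metis
qed

lemma g_zero: "g (\<lambda>A. 0) = 0\<^sub>m n n"
proof -
  have "(\<lambda>A::nat set. 0::real) = (\<lambda>A. 0 * cl_scal 1 A)" by simp
  then have "g (\<lambda>A. 0) = complex_of_real 0 \<cdot>\<^sub>m g (cl_scal 1)"
    using g_smult[of "cl_scal 1" 0] unfolding cl_carrier_def cl_scal_def by auto
  then show ?thesis using g_one by auto
qed

lemma g_sum:
  assumes "S \<subseteq> PP d"
  shows "g (\<lambda>C. \<Sum>A\<in>S. x A * cl_basis A C) \<in> carrier_mat n n \<and>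
    (\<forall>i<n. \<forall>j<n. g (\<lambda>C. \<Sum>A\<in>S. x A * cl_basis A C) $$ (i,j) = (\<Sum>A\<in>S. complex_of_real (x A) * G A $$ (i,j)))"
proof -
  have "finite S" using assms finite_subset by blast
  then show ?thesis using assms
  proof (induction S)
    case empty
    then show ?case using g_zero by simp
  next
    case (insert a S)
    have aS: "a \<subseteq> {..<d}" using insert by auto
    have c1: "(\<lambda>C. x a * cl_basis a C) \<in> cl_carrier d"
      using aS unfolding cl_carrier_def cl_basis_def by auto
    have c2: "(\<lambda>C. \<Sum>A\<in>S. x A * cl_basis A C) \<in> cl_carrier d"
      using insert(4) unfolding cl_carrier_def cl_basis_def by (auto intro!: sum.neutral)
    have e: "(\<lambda>C. \<Sum>A\<in>insert a S. x A * cl_basis A C) = (\<lambda>C. x a * cl_basis a C + (\<Sum>A\<in>S. x A * cl_basis A C))"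
      using insert by simp
    have ga: "g (\<lambda>C. x a * cl_basis a C) = complex_of_real (x a) \<cdot>\<^sub>m G a"
      unfolding G_def by (rule g_smult[OF rbasis_carrier[OF aS]])
    have IH: "g (\<lambda>C. \<Sum>A\<in>S. x A * cl_basis A C) \<in> carrier_mat n n"
      "\<forall>i<n. \<forall>j<n. g (\<lambda>C. \<Sum>A\<in>S. x A * cl_basis A C) $$ (i,j) = (\<Sum>A\<in>S. complex_of_real (x A) * G A $$ (i,j))"
      using insert by auto
    show ?case unfolding e g_add[OF c1 c2] ga using IH G_carrier[OF aS] insert(2) insert(1)
      by auto
  qed
qed

lemma carrier_expand:
  fixes x :: "'a::real_algebra_1 cl"
  assumes "x \<in> cl_carrier d"
  shows "x = (\<lambda>C. \<Sum>A\<in>PP d. x A * cl_basis A C)"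
proof
  fix C
  show "x C = (\<Sum>A\<in>PP d. x A * cl_basis A C)"
  proof (cases "C \<subseteq> {..<d}")
    case True
    have "(\<Sum>A\<in>PP d. x A * cl_basis A C) = (\<Sum>A\<in>PP d. if A = C then x C else 0)"
      by (intro sum.cong refl) (auto simp: cl_basis_def)
    then show ?thesis using True by (simp add: sum.delta')
  next
    case False
    then have "(\<Sum>A\<in>PP d. x A * cl_basis A C) = 0"
      by (intro sum.neutral) (auto simp: cl_basis_def)
    then show ?thesis using assms False unfolding cl_carrier_def by auto
  qed
qed

lemma gC_carrier: "gC x \<in> carrier_mat n n"
  unfolding gammaC_def by simp

lemma gC_dims[simp]: "dim_row (gC x) = n" "dim_col (gC x) = n"
  unfolding gammaC_def by auto

lemma gC_index: "i < n \<Longrightarrow> j < n \<Longrightarrow> gC x $$ (i,j) = (\<Sum>A\<in>PP d. x A * G A $$ (i,j))"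
  unfolding gammaC_def G_def by simp

lemma g_gC: "x \<in> cl_carrier d \<Longrightarrow> g x = gC (cl_complexify x)"
proof -
  assume x: "x \<in> cl_carrier d"
  have gs: "g x \<in> carrier_mat n n \<and> (\<forall>i<n. \<forall>j<n. g x $$ (i,j) = (\<Sum>A\<in>PP d. complex_of_real (x A) * G A $$ (i,j)))"
    using g_sum[of "PP d" x] carrier_expand[OF x, symmetric] by simp
  show ?thesis
  proof (rule eq_matI)
    fix i j assume "i < dim_row (gC (cl_complexify x))" "j < dim_col (gC (cl_complexify x))"
    then have ij: "i < n" "j < n" by auto
    show "g x $$ (i, j) = gC (cl_complexify x) $$ (i, j)"
      unfolding gC_index[OF ij] using gs ij by (simp add: cl_complexify_def)
  qed (use gs in auto)
qed

lemma gC_basis: "A \<subseteq> {..<d} \<Longrightarrow> gC (cl_basis A) = G A"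
proof -
  assume A: "A \<subseteq> {..<d}"
  have "gC (cl_basis A) = gC (cl_complexify (cl_basis A))" by (simp add: basis_complexify)
  also have "\<dots> = G A" unfolding G_def by (rule g_gC[OF rbasis_carrier[OF A], symmetric])
  finally show ?thesis .
qed

lemma gC_scal: "gC (cl_scal c) = c \<cdot>\<^sub>m 1\<^sub>m n"
proof (rule eq_matI)
  fix i j assume ij: "i < dim_row (c \<cdot>\<^sub>m 1\<^sub>m n)" "j < dim_col (c \<cdot>\<^sub>m 1\<^sub>m n)"
  then have ij: "i < n" "j < n" by auto
  then have "gC (cl_scal c) $$ (i,j) = (\<Sum>A\<in>PP d. if A = {} then c * G {} $$ (i,j) else 0)"
    unfolding gC_index[OF ij] by (intro sum.cong refl) (auto simp: cl_scal_def)
  also have "\<dots> = c * G {} $$ (i,j)" by (simp add: sum.delta')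
  finally show "gC (cl_scal c) $$ (i,j) = (c \<cdot>\<^sub>m 1\<^sub>m n) $$ (i,j)" using ij by (simp add: G_empty)
qed (auto simp: gammaC_def)

lemma gC_add: "gC (\<lambda>A. x A + y A) = gC x + gC y"
  by (rule eq_matI) (auto simp: gC_index gammaC_def algebra_simps sum.distrib)

lemma gC_diff: "gC (\<lambda>A. x A - y A) = gC x - gC y"
  by (rule eq_matI) (auto simp: gC_index gammaC_def algebra_simps sum_subtractf)

lemma gC_smult: "gC (\<lambda>A. c * x A) = c \<cdot>\<^sub>m gC x"
  by (rule eq_matI) (auto simp: gC_index gammaC_def algebra_simps sum_distrib_left)

lemma gC_zero: "gC (\<lambda>A. 0) = 0\<^sub>m n n"
  by (rule eq_matI) (auto simp: gC_index gammaC_def)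

lemma gC_mult: "gC (mul x y) = gC x * gC y"
proof (rule eq_matI)
  fix i j assume "i < dim_row (gC x * gC y)" "j < dim_col (gC x * gC y)"
  then have i: "i < n" and j: "j < n" by (auto simp: gammaC_def)
  have GA: "A \<in> PP d \<Longrightarrow> G A \<in> carrier_mat n n" for A using G_carrier by auto
  have "gC (mul x y) $$ (i,j) = (\<Sum>C\<in>PP d. mul x y C * G C $$ (i,j))" by (rule gC_index[OF i j])
  also have "\<dots> = (\<Sum>C\<in>PP d. \<Sum>A\<in>PP d. \<Sum>B\<in>PP d. if sym_diff A B = C then
      of_real (cl_sign eps A B) * x A * y B * G C $$ (i,j) else 0)"
    by (intro sum.cong refl) (auto simp: mult_apply sum_distrib_right intro!: sum.cong)
  also have "\<dots> = (\<Sum>A\<in>PP d. \<Sum>B\<in>PP d. of_real (cl_sign eps A B) * x A * y B * G (sym_diff A B) $$ (i,j))"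
    by (rule sum_collapse_sd) auto
  also have "\<dots> = (\<Sum>A\<in>PP d. \<Sum>B\<in>PP d. x A * y B * (G A * G B) $$ (i,j))"
  proof (intro sum.cong refl)
    fix A B assume "A \<in> PP d" "B \<in> PP d"
    then have AB: "A \<subseteq> {..<d}" "B \<subseteq> {..<d}" "sym_diff A B \<subseteq> {..<d}" by auto
    show "of_real (cl_sign eps A B) * x A * y B * G (sym_diff A B) $$ (i,j) = x A * y B * (G A * G B) $$ (i,j)"
      unfolding G_mult[OF AB(1,2)] G_smult_index[OF AB(3) i j] by simp
  qed
  also have "\<dots> = (\<Sum>A\<in>PP d. \<Sum>B\<in>PP d. \<Sum>k<n. x A * y B * (G A $$ (i,k) * G B $$ (k,j)))"
    by (intro sum.cong refl) (simp add: mult_entry[OF GA GA i j] sum_distrib_left)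
  also have "\<dots> = (\<Sum>k<n. \<Sum>A\<in>PP d. \<Sum>B\<in>PP d. x A * y B * (G A $$ (i,k) * G B $$ (k,j)))"
    by (subst sum.swap, rule sum.cong[OF refl], rule sum.swap)
  also have "\<dots> = (\<Sum>k<n. (\<Sum>A\<in>PP d. x A * G A $$ (i,k)) * (\<Sum>B\<in>PP d. y B * G B $$ (k,j)))"
    by (intro sum.cong refl) (simp add: sum_product algebra_simps)
  also have "\<dots> = (gC x * gC y) $$ (i,j)"
    by (simp add: mult_entry[OF gC_carrier gC_carrier i j] gC_index i j)
  finally show "gC (mul x y) $$ (i,j) = (gC x * gC y) $$ (i,j)" .
qed (auto simp: gammaC_def)

end

definition tr :: "nat \<Rightarrow> complex mat \<Rightarrow> complex" where
  "tr n M = (\<Sum>i<n. M $$ (i,i))"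

lemma tr_comm:
  assumes "A \<in> carrier_mat n n" "B \<in> carrier_mat n n"
  shows "tr n (A * B) = tr n (B * A)"
proof -
  have "tr n (A * B) = (\<Sum>i<n. \<Sum>k<n. A $$ (i,k) * B $$ (k,i))"
    unfolding tr_def by (intro sum.cong refl) (simp add: mult_entry[OF assms])
  also have "\<dots> = (\<Sum>k<n. \<Sum>i<n. B $$ (k,i) * A $$ (i,k))"
    by (subst sum.swap) (simp add: mult.commute)
  also have "\<dots> = tr n (B * A)"
    unfolding tr_def by (intro sum.cong refl) (simp add: mult_entry[OF assms(2,1)])
  finally show ?thesis .
qed

lemma tr_smult: "A \<in> carrier_mat n n \<Longrightarrow> tr n (c \<cdot>\<^sub>m A) = c * tr n A"
  unfolding tr_def by (simp add: sum_distrib_left)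

lemma tr_one: "tr n (1\<^sub>m n) = of_nat n"
  unfolding tr_def by simp

lemma smult_smult_m: "a \<cdot>\<^sub>m (b \<cdot>\<^sub>m (A :: 'a::comm_semiring_1 mat)) = (a * b) \<cdot>\<^sub>m A"
  by (rule eq_matI) (auto simp: ac_simps)
lemma one_smult_m: "(1::'a::semiring_1) \<cdot>\<^sub>m A = A"
  by (rule eq_matI) auto

context clrep
begin

definition Gi :: "nat set \<Rightarrow> complex mat" where
  "Gi A = complex_of_real (1 / cl_sign eps A A) \<cdot>\<^sub>m G A"

lemma sd_self: "sym_diff A A = {}" by auto

lemma Gi_carrier: "A \<subseteq> {..<d} \<Longrightarrow> Gi A \<in> carrier_mat n n"
  unfolding Gi_def using G_carrier by simp

lemma G_sq: "A \<subseteq> {..<d} \<Longrightarrow> G A * G A = complex_of_real (cl_sign eps A A) \<cdot>\<^sub>m 1\<^sub>m n"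
  using G_mult[of A A] by (simp add: sd_self G_empty)

lemma G_Gi: "A \<subseteq> {..<d} \<Longrightarrow> G A * Gi A = 1\<^sub>m n"
  unfolding Gi_def using G_carrier[of A] sign_nz[of A A]
  by (simp add: mult_smult_distrib[of _ n n _ n] G_sq smult_smult_m one_smult_m)

lemma Gi_G: "A \<subseteq> {..<d} \<Longrightarrow> Gi A * G A = 1\<^sub>m n"
  unfolding Gi_def using G_carrier[of A] sign_nz[of A A]
  by (simp add: mult_smult_assoc_mat[of _ n n _ n] G_sq smult_smult_m one_smult_m)

lemma G_anticomm:
  assumes B: "B \<subseteq> {..<d}" and j: "j \<in> B" and ev: "even (card B)"
  shows "G {j} * G B = (-1) \<cdot>\<^sub>m (G B * G {j})"
proof -
  have jd: "{j} \<subseteq> {..<d}" using B j by auto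
  have fB: "finite B" using B finite_subset by blast
  have sd: "sym_diff {j} B = sym_diff B {j}" by auto
  have "G {j} * G B = complex_of_real (cl_sign eps {j} B) \<cdot>\<^sub>m G (sym_diff {j} B)" by (rule G_mult[OF jd B])
  also have "\<dots> = (-1) \<cdot>\<^sub>m (complex_of_real (cl_sign eps B {j}) \<cdot>\<^sub>m G (sym_diff B {j}))"
    unfolding sd cl_sign_single_in[OF fB j ev] by (simp add: smult_smult_m)
  also have "complex_of_real (cl_sign eps B {j}) \<cdot>\<^sub>m G (sym_diff B {j}) = G B * G {j}"
    by (rule G_mult[OF B jd, symmetric])
  finally show ?thesis .
qed

lemma tr_G:
  assumes B: "B \<subseteq> {..<d}" and ne: "B \<noteq> {}" and ev: "even (card B)"
  shows "tr n (G B) = 0"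
proof -
  obtain j where j: "j \<in> B" using ne by auto
  have jd: "{j} \<subseteq> {..<d}" using B j by auto
  define e where "e = complex_of_real (cl_sign eps {j} {j})"
  have e0: "e \<noteq> 0" unfolding e_def using sign_nz[OF jd jd] by simp
  have Gj: "G {j} \<in> carrier_mat n n" and GB: "G B \<in> carrier_mat n n" using G_carrier jd B by auto
  have sq: "G {j} * G {j} = e \<cdot>\<^sub>m 1\<^sub>m n" unfolding e_def by (rule G_sq[OF jd])
  have "tr n (G {j} * (G B * G {j})) = tr n ((G B * G {j}) * G {j})"
    by (rule tr_comm) (use Gj GB in auto)
  also have "(G B * G {j}) * G {j} = G B * (e \<cdot>\<^sub>m 1\<^sub>m n)" using Gj GB sq by simp
  also have "\<dots> = e \<cdot>\<^sub>m G B" using GB by (simp add: mult_smult_distrib[of _ n n _ n])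
  finally have t1: "tr n (G {j} * (G B * G {j})) = e * tr n (G B)" using tr_smult GB by simp
  have "G {j} * (G B * G {j}) = (G {j} * G B) * G {j}" using Gj GB by simp
  also have "\<dots> = ((-1) \<cdot>\<^sub>m (G B * G {j})) * G {j}" unfolding G_anticomm[OF B j ev] ..
  also have "\<dots> = (-1) \<cdot>\<^sub>m ((G B * G {j}) * G {j})" using Gj GB by (simp add: mult_smult_assoc_mat[of _ n n _ n])
  also have "(G B * G {j}) * G {j} = e \<cdot>\<^sub>m G B" using Gj GB sq by (simp add: mult_smult_distrib[of _ n n _ n])
  finally have t2: "tr n (G {j} * (G B * G {j})) = - e * tr n (G B)" using tr_smult GB by simp
  from t1 t2 e0 show ?thesis by simp
qed

lemma tr_GiG:
  assumes A: "A \<subseteq> {..<d}" and B: "B \<subseteq> {..<d}" and eA: "even (card A)" and eB: "even (card B)"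
  shows "tr n (Gi A * G B) = (if A = B then of_nat n else 0)"
proof -
  have fA: "finite A" "finite B" using A B finite_subset by auto
  have sdd: "sym_diff A B \<subseteq> {..<d}" using A B by auto
  have "Gi A * G B = complex_of_real (1 / cl_sign eps A A) \<cdot>\<^sub>m (G A * G B)"
    unfolding Gi_def using G_carrier A B by (simp add: mult_smult_assoc_mat[of _ n n _ n])
  also have "\<dots> = complex_of_real (1 / cl_sign eps A A) \<cdot>\<^sub>m (complex_of_real (cl_sign eps A B) \<cdot>\<^sub>m G (sym_diff A B))"
    unfolding G_mult[OF A B] ..
  finally have e: "tr n (Gi A * G B) = complex_of_real (1 / cl_sign eps A A) * (complex_of_real (cl_sign eps A B) * tr n (G (sym_diff A B)))"
    using tr_smult G_carrier[OF sdd] by simp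
  show ?thesis
  proof (cases "A = B")
    case True
    then show ?thesis using e sign_nz[OF A A] by (simp add: sd_self G_empty tr_one)
  next
    case False
    then have "sym_diff A B \<noteq> {}" by auto
    moreover have "even (card (sym_diff A B))" using card_sd_parity[OF fA] eA eB by simp
    ultimately show ?thesis using e False tr_G[OF sdd] by simp
  qed
qed

lemma tr_mult_gC:
  assumes M: "M \<in> carrier_mat n n"
  shows "tr n (M * gC x) = (\<Sum>B\<in>PP d. x B * tr n (M * G B))"
proof -
  have GB: "B \<in> PP d \<Longrightarrow> G B \<in> carrier_mat n n" for B using G_carrier by auto
  have "tr n (M * gC x) = (\<Sum>i<n. \<Sum>k<n. M $$ (i,k) * (\<Sum>B\<in>PP d. x B * G B $$ (k,i)))"
    unfolding tr_def by (intro sum.cong refl) (simp add: mult_entry[OF M gC_carrier] gC_index)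
  also have "\<dots> = (\<Sum>i<n. \<Sum>k<n. \<Sum>B\<in>PP d. x B * (M $$ (i,k) * G B $$ (k,i)))"
    by (simp add: sum_distrib_left algebra_simps)
  also have "\<dots> = (\<Sum>B\<in>PP d. \<Sum>i<n. \<Sum>k<n. x B * (M $$ (i,k) * G B $$ (k,i)))"
    by (subst sum.swap, rule sum.cong[OF refl], rule sum.swap)
  also have "\<dots> = (\<Sum>B\<in>PP d. x B * tr n (M * G B))"
    unfolding tr_def by (intro sum.cong refl) (simp add: mult_entry[OF M GB] sum_distrib_left)
  finally show ?thesis .
qed

lemma coeff_formula:
  assumes x: "x \<in> cl_even d" and A: "A \<subseteq> {..<d}" and eA: "even (card A)"
  shows "tr n (Gi A * gC x) = of_nat n * x A"
proof -
  have "tr n (Gi A * gC x) = (\<Sum>B\<in>PP d. x B * tr n (Gi A * G B))"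
    by (rule tr_mult_gC[OF Gi_carrier[OF A]])
  also have "\<dots> = (\<Sum>B\<in>PP d. if B = A then x A * of_nat n else 0)"
  proof (intro sum.cong refl)
    fix B assume "B \<in> PP d"
    then have B: "B \<subseteq> {..<d}" by auto
    show "x B * tr n (Gi A * G B) = (if B = A then x A * of_nat n else 0)"
    proof (cases "even (card B)")
      case True then show ?thesis using tr_GiG[OF A B eA True] by auto
    next
      case False then show ?thesis using x unfolding cl_even_def by auto
    qed
  qed
  also have "\<dots> = x A * of_nat n" using A by (simp add: sum.delta')
  finally show ?thesis by simp
qed

lemma even_zero: "x \<in> cl_even d \<Longrightarrow> \<not> A \<subseteq> {..<d} \<or> odd (card A) \<Longrightarrow> x A = 0"
  unfolding cl_even_def cl_carrier_def by blast

lemma inj_even: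
  assumes x: "x \<in> cl_even d" and y: "y \<in> cl_even d" and eq: "gC x = gC y"
  shows "x = y"
proof
  fix A
  show "x A = y A"
  proof (cases "A \<subseteq> {..<d} \<and> even (card A)")
    case True
    have "of_nat n * x A = of_nat n * y A"
      using coeff_formula[OF x, of A] coeff_formula[OF y, of A] True eq by metis
    then show ?thesis using n_pos by simp
  next
    case False
    then have "\<not> A \<subseteq> {..<d} \<or> odd (card A)" by blast
    then show ?thesis using even_zero[OF x] even_zero[OF y] by simp
  qed
qed

end

context clrep
begin

lemma gC_mult_entry_left:
  assumes Y: "Y \<in> carrier_mat n n" and i: "i < n" and j: "j < n"
  shows "(gC z * Y) $$ (i,j) = (\<Sum>A\<in>PP d. z A * (G A * Y) $$ (i,j))"
proof -
  have GA: "A \<in> PP d \<Longrightarrow> G A \<in> carrier_mat n n" for A using G_carrier by auto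
  have "(gC z * Y) $$ (i,j) = (\<Sum>k<n. (\<Sum>A\<in>PP d. z A * G A $$ (i,k)) * Y $$ (k,j))"
    by (simp add: mult_entry[OF gC_carrier Y i j] gC_index i)
  also have "\<dots> = (\<Sum>A\<in>PP d. \<Sum>k<n. z A * (G A $$ (i,k) * Y $$ (k,j)))"
    by (subst sum.swap) (simp add: sum_distrib_right mult.assoc)
  also have "\<dots> = (\<Sum>A\<in>PP d. z A * (G A * Y) $$ (i,j))"
    by (intro sum.cong refl) (simp add: mult_entry[OF GA Y i j] sum_distrib_left)
  finally show ?thesis .
qed

lemma gC_mult_entry_right:
  assumes Y: "Y \<in> carrier_mat n n" and i: "i < n" and j: "j < n"
  shows "(Y * gC z) $$ (i,j) = (\<Sum>A\<in>PP d. z A * (Y * G A) $$ (i,j))"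
proof -
  have GA: "A \<in> PP d \<Longrightarrow> G A \<in> carrier_mat n n" for A using G_carrier by auto
  have "(Y * gC z) $$ (i,j) = (\<Sum>k<n. Y $$ (i,k) * (\<Sum>A\<in>PP d. z A * G A $$ (k,j)))"
    by (simp add: mult_entry[OF Y gC_carrier i j] gC_index j)
  also have "\<dots> = (\<Sum>A\<in>PP d. \<Sum>k<n. z A * (Y $$ (i,k) * G A $$ (k,j)))"
    by (subst sum.swap) (simp add: sum_distrib_left mult.left_commute)
  also have "\<dots> = (\<Sum>A\<in>PP d. z A * (Y * G A) $$ (i,j))"
    by (intro sum.cong refl) (simp add: mult_entry[OF Y GA i j] sum_distrib_left)
  finally show ?thesis .
qed

lemma gC_commute:
  assumes Y: "Y \<in> carrier_mat n n" and comm: "\<forall>A. A \<subseteq> {..<d} \<longrightarrow> G A * Y = Y * G A"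
  shows "gC z * Y = Y * gC z"
proof (rule eq_matI)
  fix i j assume "i < dim_row (Y * gC z)" "j < dim_col (Y * gC z)"
  then have i: "i < n" and j: "j < n" using Y by auto
  show "(gC z * Y) $$ (i,j) = (Y * gC z) $$ (i,j)"
    unfolding gC_mult_entry_left[OF Y i j] gC_mult_entry_right[OF Y i j] using comm by auto
qed (use Y in auto)

lemma mat_vec_zero: "Y \<in> carrier_mat n n \<Longrightarrow> Y *\<^sub>v 0\<^sub>v n = 0\<^sub>v n"
  by (rule eq_vecI) (auto simp: scalar_prod_def)

lemma mat_unit_entry: "(Y::complex mat) \<in> carrier_mat n n \<Longrightarrow> i < n \<Longrightarrow> j < n \<Longrightarrow> (Y *\<^sub>v unit_vec n j) $ i = Y $$ (i,j)"
  using scalar_prod_right_unit[of j n "Matrix.row Y i"] by simp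

lemma schur:
  assumes Y: "Y \<in> carrier_mat n n" and comm: "\<forall>A. A \<subseteq> {..<d} \<longrightarrow> G A * Y = Y * G A"
  shows "\<exists>c. Y = c \<cdot>\<^sub>m 1\<^sub>m n"
proof -
  obtain lam where "lam \<in> spectrum Y" using spectrum_non_empty[OF Y n_pos] by auto
  then obtain v where ev: "eigenvector Y v lam" unfolding spectrum_def eigenvalue_def by auto
  then have v: "v \<in> carrier_vec n" "v \<noteq> 0\<^sub>v n" "Y *\<^sub>v v = lam \<cdot>\<^sub>v v"
    unfolding eigenvector_def using Y by auto
  define W where "W = {w \<in> carrier_vec n. Y *\<^sub>v w = lam \<cdot>\<^sub>v w}"
  have sub: "is_subspace_vec n W"
    unfolding is_subspace_vec_def W_def
  proof (intro conjI ballI allI)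
    show "{w \<in> carrier_vec n. Y *\<^sub>v w = lam \<cdot>\<^sub>v w} \<subseteq> carrier_vec n" by auto
    show "0\<^sub>v n \<in> {w \<in> carrier_vec n. Y *\<^sub>v w = lam \<cdot>\<^sub>v w}"
      using mat_vec_zero[OF Y] by auto
  next
    fix a b assume a: "a \<in> {w \<in> carrier_vec n. Y *\<^sub>v w = lam \<cdot>\<^sub>v w}" and b: "b \<in> {w \<in> carrier_vec n. Y *\<^sub>v w = lam \<cdot>\<^sub>v w}"
    then show "a + b \<in> {w \<in> carrier_vec n. Y *\<^sub>v w = lam \<cdot>\<^sub>v w}"
      using mult_add_distrib_mat_vec[OF Y] smult_add_distrib_vec[of a n b lam] by auto
  next
    fix c a assume a: "a \<in> {w \<in> carrier_vec n. Y *\<^sub>v w = lam \<cdot>\<^sub>v w}"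
    then show "c \<cdot>\<^sub>v a \<in> {w \<in> carrier_vec n. Y *\<^sub>v w = lam \<cdot>\<^sub>v w}"
      using mult_mat_vec[OF Y, of a c] by (auto simp: smult_smult_assoc mult.commute)
  qed
  have inv: "\<forall>x\<in>cl_carrier d. \<forall>w\<in>W. g x *\<^sub>v w \<in> W"
  proof (intro ballI)
    fix x :: "real cl" and w assume x: "x \<in> cl_carrier d" and w: "w \<in> W"
    have gx: "g x \<in> carrier_mat n n" by (rule g_carrier[OF x])
    have cm: "g x * Y = Y * g x" unfolding g_gC[OF x] by (rule gC_commute[OF Y comm])
    have wc: "w \<in> carrier_vec n" and Yw: "Y *\<^sub>v w = lam \<cdot>\<^sub>v w" using w unfolding W_def by auto
    have "Y *\<^sub>v (g x *\<^sub>v w) = (Y * g x) *\<^sub>v w" using Y gx wc by simp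
    also have "\<dots> = g x *\<^sub>v (Y *\<^sub>v w)" unfolding cm[symmetric] using Y gx wc by simp
    also have "\<dots> = lam \<cdot>\<^sub>v (g x *\<^sub>v w)" unfolding Yw by (rule mult_mat_vec[OF gx wc])
    finally show "g x *\<^sub>v w \<in> W" unfolding W_def using gx wc by auto
  qed
  have "W = {0\<^sub>v n} \<or> W = carrier_vec n" using irr sub inv unfolding irreducible_cl_rep_def by blast
  moreover have "v \<in> W" using v unfolding W_def by auto
  ultimately have Wc: "W = carrier_vec n" using v(2) by auto
  have "Y = lam \<cdot>\<^sub>m 1\<^sub>m n"
  proof (rule eq_matI)
    fix i j assume "i < dim_row (lam \<cdot>\<^sub>m 1\<^sub>m n)" "j < dim_col (lam \<cdot>\<^sub>m 1\<^sub>m n)"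
    then have i: "i < n" and j: "j < n" by auto
    have "unit_vec n j \<in> W" using Wc by simp
    then have "Y *\<^sub>v unit_vec n j = lam \<cdot>\<^sub>v unit_vec n j" unfolding W_def by auto
    then have "(Y *\<^sub>v unit_vec n j) $ i = (lam \<cdot>\<^sub>v unit_vec n j) $ i" by simp
    then show "Y $$ (i,j) = (lam \<cdot>\<^sub>m 1\<^sub>m n) $$ (i,j)" using i j Y mat_unit_entry[OF Y i j] by simp
  qed (use Y in auto)
  then show ?thesis by blast
qed

end

context clrep
begin

definition msum :: "('b \<Rightarrow> complex mat) \<Rightarrow> 'b set \<Rightarrow> complex mat" where
  "msum f S = mat n n (\<lambda>(i,j). \<Sum>a\<in>S. f a $$ (i,j))"

lemma msum_carrier[simp]: "msum f S \<in> carrier_mat n n"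
  unfolding msum_def by simp

lemma msum_index: "i < n \<Longrightarrow> j < n \<Longrightarrow> msum f S $$ (i,j) = (\<Sum>a\<in>S. f a $$ (i,j))"
  unfolding msum_def by simp

lemma msum_mult_left:
  assumes X: "X \<in> carrier_mat n n" and f: "\<And>a. a \<in> S \<Longrightarrow> f a \<in> carrier_mat n n"
  shows "X * msum f S = msum (\<lambda>a. X * f a) S"
proof (rule eq_matI)
  fix i j assume "i < dim_row (msum (\<lambda>a. X * f a) S)" "j < dim_col (msum (\<lambda>a. X * f a) S)"
  then have i: "i < n" and j: "j < n" by (auto simp: msum_def)
  have "(X * msum f S) $$ (i,j) = (\<Sum>k<n. X $$ (i,k) * (\<Sum>a\<in>S. f a $$ (k,j)))"
    by (simp add: mult_entry[OF X msum_carrier i j] msum_index j)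
  also have "\<dots> = (\<Sum>a\<in>S. \<Sum>k<n. X $$ (i,k) * f a $$ (k,j))"
    by (subst sum.swap) (simp add: sum_distrib_left)
  also have "\<dots> = msum (\<lambda>a. X * f a) S $$ (i,j)"
    by (simp add: msum_index i j mult_entry[OF X f i j])
  finally show "(X * msum f S) $$ (i,j) = msum (\<lambda>a. X * f a) S $$ (i,j)" .
qed (use X in \<open>auto simp: msum_def\<close>)

lemma msum_mult_right:
  assumes X: "X \<in> carrier_mat n n" and f: "\<And>a. a \<in> S \<Longrightarrow> f a \<in> carrier_mat n n"
  shows "msum f S * X = msum (\<lambda>a. f a * X) S"
proof (rule eq_matI)
  fix i j assume "i < dim_row (msum (\<lambda>a. f a * X) S)" "j < dim_col (msum (\<lambda>a. f a * X) S)"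
  then have i: "i < n" and j: "j < n" by (auto simp: msum_def)
  have "(msum f S * X) $$ (i,j) = (\<Sum>k<n. (\<Sum>a\<in>S. f a $$ (i,k)) * X $$ (k,j))"
    by (simp add: mult_entry[OF msum_carrier X i j] msum_index i)
  also have "\<dots> = (\<Sum>a\<in>S. \<Sum>k<n. f a $$ (i,k) * X $$ (k,j))"
    by (subst sum.swap) (simp add: sum_distrib_right)
  also have "\<dots> = msum (\<lambda>a. f a * X) S $$ (i,j)"
    by (simp add: msum_index i j mult_entry[OF f X i j])
  finally show "(msum f S * X) $$ (i,j) = msum (\<lambda>a. f a * X) S $$ (i,j)" .
qed (use X in \<open>auto simp: msum_def\<close>)

lemma msum_cong: "(\<And>a. a \<in> S \<Longrightarrow> f a = h a) \<Longrightarrow> msum f S = msum h S"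
  unfolding msum_def by (auto intro!: sum.cong)

lemma msum_reindex: "bij_betw k S S \<Longrightarrow> msum (\<lambda>a. f (k a)) S = msum f S"
  unfolding msum_def using sum.reindex_bij_betw[of k S S "\<lambda>a. f a $$ _"] by (auto intro!: cong[of "mat n n"])

lemma tr_msum: "tr n (msum f S) = (\<Sum>a\<in>S. tr n (f a))"
  unfolding tr_def msum_index by (simp add: msum_index sum.swap[of _ "{..<n}"])

lemma Gi_prod:
  assumes B: "B \<subseteq> {..<d}" and C: "C \<subseteq> {..<d}"
  shows "Gi B * Gi C = complex_of_real (1 / cl_sign eps C B) \<cdot>\<^sub>m Gi (sym_diff C B)"
proof -
  define D where "D = sym_diff C B"
  have D: "D \<subseteq> {..<d}" using B C unfolding D_def by auto
  define s where "s = complex_of_real (cl_sign eps C B)"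
  have s0: "s \<noteq> 0" unfolding s_def using sign_nz[OF C B] by simp
  have GB: "G B \<in> carrier_mat n n" "Gi B \<in> carrier_mat n n" using G_carrier[OF B] Gi_carrier[OF B] by auto
  have GC: "G C \<in> carrier_mat n n" "Gi C \<in> carrier_mat n n" using G_carrier[OF C] Gi_carrier[OF C] by auto
  have GD: "G D \<in> carrier_mat n n" "Gi D \<in> carrier_mat n n" using G_carrier[OF D] Gi_carrier[OF D] by auto
  define X where "X = Gi B * Gi C"
  define Y where "Y = complex_of_real (1 / cl_sign eps C B) \<cdot>\<^sub>m Gi D"
  define A where "A = G C * G B"
  have Xc: "X \<in> carrier_mat n n" and Yc: "Y \<in> carrier_mat n n" and Ac: "A \<in> carrier_mat n n"
    unfolding X_def Y_def A_def using GB GC GD by auto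
  have XA: "X * A = 1\<^sub>m n"
  proof -
    have "X * A = Gi B * ((Gi C * G C) * G B)" unfolding X_def A_def using GB GC by (simp add: assoc_mult_mat[of _ n n _ n _ n])
    also have "\<dots> = 1\<^sub>m n" using Gi_G[OF C] Gi_G[OF B] GB by simp
    finally show ?thesis .
  qed
  have AY: "A * Y = 1\<^sub>m n"
  proof -
    have "A = s \<cdot>\<^sub>m G D" unfolding A_def s_def D_def by (rule G_mult[OF C B])
    then have "A * Y = (s \<cdot>\<^sub>m G D) * (complex_of_real (1 / cl_sign eps C B) \<cdot>\<^sub>m Gi D)" unfolding Y_def by simp
    also have "\<dots> = (s * complex_of_real (1 / cl_sign eps C B)) \<cdot>\<^sub>m (G D * Gi D)"
      using GD by (simp add: mult_smult_assoc_mat[of _ n n _ n] mult_smult_distrib[of _ n n _ n] smult_smult_m)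
    also have "\<dots> = 1\<^sub>m n" using s0 G_Gi[OF D] unfolding s_def by (simp add: one_smult_m)
    finally show ?thesis .
  qed
  have "X = X * (A * Y)" using AY Xc by simp
  also have "\<dots> = (X * A) * Y" using Xc Ac Yc by simp
  also have "\<dots> = Y" using XA Yc by simp
  finally show ?thesis unfolding X_def Y_def D_def .
qed

definition avg :: "complex mat \<Rightarrow> complex mat" where
  "avg X = msum (\<lambda>B. G B * X * Gi B) (PP d)"

lemma bij_sd: "C \<subseteq> {..<d} \<Longrightarrow> bij_betw (\<lambda>B. sym_diff C B) (PP d) (PP d)"
  by (rule bij_betw_byWitness[where f' = "\<lambda>B. sym_diff C B"]) auto

lemma avg_conj:
  assumes X: "X \<in> carrier_mat n n" and C: "C \<subseteq> {..<d}"
  shows "G C * avg X * Gi C = avg X"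
proof -
  have GC: "G C \<in> carrier_mat n n" "Gi C \<in> carrier_mat n n" using G_carrier[OF C] Gi_carrier[OF C] by auto
  have f: "B \<in> PP d \<Longrightarrow> G B * X * Gi B \<in> carrier_mat n n" for B
    using G_carrier Gi_carrier X by (meson PowD mult_carrier_mat)
  have "G C * avg X * Gi C = msum (\<lambda>B. G C * (G B * X * Gi B) * Gi C) (PP d)"
  proof -
    have "G C * msum (\<lambda>B. G B * X * Gi B) (PP d) = msum (\<lambda>B. G C * (G B * X * Gi B)) (PP d)"
      by (rule msum_mult_left[OF GC(1) f])
    moreover have "msum (\<lambda>B. G C * (G B * X * Gi B)) (PP d) * Gi C = msum (\<lambda>B. G C * (G B * X * Gi B) * Gi C) (PP d)"
      by (rule msum_mult_right[OF GC(2)]) (use GC f in auto)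
    ultimately show ?thesis unfolding avg_def by simp
  qed
  also have "\<dots> = msum (\<lambda>B. G (sym_diff C B) * X * Gi (sym_diff C B)) (PP d)"
  proof (rule msum_cong)
    fix B assume "B \<in> PP d"
    then have B: "B \<subseteq> {..<d}" by auto
    define D where "D = sym_diff C B"
    have D: "D \<subseteq> {..<d}" using B C unfolding D_def by auto
    have GB: "G B \<in> carrier_mat n n" "Gi B \<in> carrier_mat n n" using G_carrier[OF B] Gi_carrier[OF B] by auto
    have GD: "G D \<in> carrier_mat n n" "Gi D \<in> carrier_mat n n" using G_carrier[OF D] Gi_carrier[OF D] by auto
    define s where "s = complex_of_real (cl_sign eps C B)"
    have s0: "s \<noteq> 0" unfolding s_def using sign_nz[OF C B] by simp
    have "G C * (G B * X * Gi B) * Gi C = (G C * G B) * X * (Gi B * Gi C)"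
      using GC GB X by (simp add: assoc_mult_mat[of _ n n _ n _ n])
    also have "\<dots> = (s \<cdot>\<^sub>m G D) * X * ((1 / s) \<cdot>\<^sub>m Gi D)"
      unfolding G_mult[OF C B] Gi_prod[OF B C] s_def D_def by simp
    also have "\<dots> = (s * (1 / s)) \<cdot>\<^sub>m (G D * X * Gi D)"
      using GD X by (simp add: mult_smult_assoc_mat[of _ n n _ n] mult_smult_distrib[of _ n n _ n] smult_smult_m)
    also have "\<dots> = G D * X * Gi D" using s0 by (simp add: one_smult_m)
    finally show "G C * (G B * X * Gi B) * Gi C = G (sym_diff C B) * X * Gi (sym_diff C B)" unfolding D_def .
  qed
  also have "\<dots> = avg X" unfolding avg_def
    by (rule msum_reindex[OF bij_sd[OF C], of "\<lambda>D. G D * X * Gi D"])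
  finally show ?thesis .
qed

lemma avg_comm:
  assumes X: "X \<in> carrier_mat n n" and C: "C \<subseteq> {..<d}"
  shows "G C * avg X = avg X * G C"
proof -
  have GC: "G C \<in> carrier_mat n n" "Gi C \<in> carrier_mat n n" using G_carrier[OF C] Gi_carrier[OF C] by auto
  have Ac: "avg X \<in> carrier_mat n n" unfolding avg_def by simp
  have "G C * avg X = G C * avg X * 1\<^sub>m n" using GC Ac by simp
  also have "\<dots> = G C * avg X * (Gi C * G C)" using Gi_G[OF C] by simp
  also have "\<dots> = (G C * avg X * Gi C) * G C" using GC Ac by (simp add: assoc_mult_mat[of _ n n _ n _ n])
  also have "\<dots> = avg X * G C" unfolding avg_conj[OF X C] ..
  finally show ?thesis .
qed

lemma card_PP: "card (PP d) = 2 ^ d" by (simp add: card_Pow)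

lemma tr_avg:
  assumes X: "X \<in> carrier_mat n n"
  shows "tr n (avg X) = of_nat (2 ^ d) * tr n X"
proof -
  have "tr n (avg X) = (\<Sum>B\<in>PP d. tr n (G B * X * Gi B))" unfolding avg_def tr_msum ..
  also have "\<dots> = (\<Sum>B\<in>PP d. tr n X)"
  proof (intro sum.cong refl)
    fix B assume "B \<in> PP d"
    then have B: "B \<subseteq> {..<d}" by auto
    have GB: "G B \<in> carrier_mat n n" "Gi B \<in> carrier_mat n n" using G_carrier[OF B] Gi_carrier[OF B] by auto
    have "tr n (G B * X * Gi B) = tr n (Gi B * (G B * X))" by (rule tr_comm) (use GB X in auto)
    also have "Gi B * (G B * X) = X" using Gi_G[OF B] GB X by (simp add: assoc_mult_mat[of _ n n _ n _ n, symmetric])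
    finally show "tr n (G B * X * Gi B) = tr n X" .
  qed
  also have "\<dots> = of_nat (2 ^ d) * tr n X" using card_PP by simp
  finally show ?thesis .
qed

lemma avg_scalar:
  assumes X: "X \<in> carrier_mat n n"
  shows "avg X = (of_nat (2 ^ d) * tr n X / of_nat n) \<cdot>\<^sub>m 1\<^sub>m n"
proof -
  have Ac: "avg X \<in> carrier_mat n n" unfolding avg_def by simp
  obtain c where c: "avg X = c \<cdot>\<^sub>m 1\<^sub>m n"
    using schur[OF Ac] avg_comm[OF X] by auto
  have "tr n (avg X) = c * of_nat n" unfolding c by (simp add: tr_smult tr_one)
  then have "c = of_nat (2 ^ d) * tr n X / of_nat n" using tr_avg[OF X] n_pos by (simp add: field_simps)
  then show ?thesis using c by simp
qed

lemma entry_identity: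
  assumes i: "i < n" and j: "j < n" and k: "k < n" and l: "l < n"
  shows "(\<Sum>B\<in>PP d. G B $$ (i,j) * Gi B $$ (k,l)) = (if j = k \<and> i = l then of_nat (2 ^ d) / of_nat n else 0)"
proof -
  define E :: "complex mat" where "E = mat n n (\<lambda>(p,q). if p = j \<and> q = k then 1 else 0)"
  have Ec: "E \<in> carrier_mat n n" unfolding E_def by simp
  have ent: "(G B * E * Gi B) $$ (i,l) = G B $$ (i,j) * Gi B $$ (k,l)" if B: "B \<subseteq> {..<d}" for B
  proof -
    have GB: "G B \<in> carrier_mat n n" "Gi B \<in> carrier_mat n n" using G_carrier[OF B] Gi_carrier[OF B] by auto
    have GE: "G B * E \<in> carrier_mat n n" using GB Ec by simp
    have e1: "(G B * E) $$ (i,q) = (if q = k then G B $$ (i,j) else 0)" if q: "q < n" for q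
    proof -
      have "(G B * E) $$ (i,q) = (\<Sum>p<n. G B $$ (i,p) * E $$ (p,q))" by (rule mult_entry[OF GB(1) Ec i q])
      also have "\<dots> = (\<Sum>p<n. if p = j then (if q = k then G B $$ (i,j) else 0) else 0)"
        by (intro sum.cong refl) (auto simp: E_def q)
      also have "\<dots> = (if q = k then G B $$ (i,j) else 0)" using j by (simp add: sum.delta)
      finally show ?thesis .
    qed
    have "(G B * E * Gi B) $$ (i,l) = (\<Sum>q<n. (G B * E) $$ (i,q) * Gi B $$ (q,l))"
      by (rule mult_entry[OF GE GB(2) i l])
    also have "\<dots> = (\<Sum>q<n. if q = k then G B $$ (i,j) * Gi B $$ (k,l) else 0)"
      by (intro sum.cong refl) (auto simp: e1)
    also have "\<dots> = G B $$ (i,j) * Gi B $$ (k,l)" using k by (simp add: sum.delta)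
    finally show ?thesis .
  qed
  have trE: "tr n E = (if j = k then 1 else 0)"
  proof -
    have "tr n E = (\<Sum>p<n. if p = j then (if j = k then 1 else 0) else 0)"
      unfolding tr_def by (intro sum.cong refl) (auto simp: E_def)
    also have "\<dots> = (if j = k then 1 else 0)" using j by (simp add: sum.delta)
    finally show ?thesis .
  qed
  have "(\<Sum>B\<in>PP d. G B $$ (i,j) * Gi B $$ (k,l)) = avg E $$ (i,l)"
    unfolding avg_def msum_index[OF i l] by (intro sum.cong refl) (auto simp: ent)
  also have "\<dots> = ((of_nat (2 ^ d) * tr n E / of_nat n) \<cdot>\<^sub>m 1\<^sub>m n) $$ (i,l)" unfolding avg_scalar[OF Ec] ..
  also have "\<dots> = (if j = k \<and> i = l then of_nat (2 ^ d) / of_nat n else 0)"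
    using i l trE by auto
  finally show ?thesis .
qed

lemma sum2_delta:
  assumes "i < (n'::nat)" "j < n'"
  shows "(\<Sum>p<n'. \<Sum>q<n'. if p = j then if q = i then X else 0 else (0::complex)) = X"
proof -
  have "(\<Sum>p<n'. \<Sum>q<n'. if p = j then if q = i then X else 0 else (0::complex))
      = (\<Sum>p<n'. if p = j then (\<Sum>q<n'. if q = i then X else 0) else 0)"
    by (intro sum.cong refl) auto
  also have "\<dots> = X" using assms by (simp add: sum.delta)
  finally show ?thesis .
qed

lemma reorder3: "(c * (a * m)) * (h::complex) = c * (m * (h * a))" by (simp add: ac_simps)

definition coef :: "complex mat \<Rightarrow> complex cl" where
  "coef M = (\<lambda>A. if A \<subseteq> {..<d} then of_nat n / of_nat (2 ^ d) * tr n (Gi A * M) else 0)"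

lemma coef_carrier: "coef M \<in> cl_carrier d"
  unfolding coef_def cl_carrier_def by auto

lemma gC_coef:
  assumes M: "M \<in> carrier_mat n n"
  shows "gC (coef M) = M"
proof (rule eq_matI)
  fix i j assume "i < dim_row M" "j < dim_col M"
  then have i: "i < n" and j: "j < n" using M by auto
  have GiA: "A \<in> PP d \<Longrightarrow> Gi A \<in> carrier_mat n n" for A using Gi_carrier by auto
  have "gC (coef M) $$ (i,j) = (\<Sum>A\<in>PP d. (of_nat n / of_nat (2 ^ d) * (\<Sum>p<n. \<Sum>q<n. Gi A $$ (p,q) * M $$ (q,p))) * G A $$ (i,j))"
    unfolding gC_index[OF i j] coef_def tr_def
    by (intro sum.cong refl) (simp add: mult_entry[OF GiA M])
  also have "\<dots> = (\<Sum>A\<in>PP d. \<Sum>p<n. \<Sum>q<n. of_nat n / of_nat (2 ^ d) * (M $$ (q,p) * (G A $$ (i,j) * Gi A $$ (p,q))))"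
    by (intro sum.cong refl) (simp add: sum_distrib_left sum_distrib_right reorder3)
  also have "\<dots> = (\<Sum>p<n. \<Sum>q<n. \<Sum>A\<in>PP d. of_nat n / of_nat (2 ^ d) * (M $$ (q,p) * (G A $$ (i,j) * Gi A $$ (p,q))))"
    by (subst sum.swap, rule sum.cong[OF refl], rule sum.swap)
  also have "\<dots> = of_nat n / of_nat (2 ^ d) * (\<Sum>p<n. \<Sum>q<n. M $$ (q,p) * (\<Sum>A\<in>PP d. G A $$ (i,j) * Gi A $$ (p,q)))"
    by (simp add: sum_distrib_left)
  also have "\<dots> = of_nat n / of_nat (2 ^ d) * (\<Sum>p<n. \<Sum>q<n. if p = j then (if q = i then M $$ (i,j) * (of_nat (2 ^ d) / of_nat n) else 0) else 0)"
    by (intro arg_cong[of _ _ "\<lambda>t. of_nat n / of_nat (2 ^ d) * t"] sum.cong refl) (auto simp: entry_identity i j)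
  also have "\<dots> = of_nat n / of_nat (2 ^ d) * (M $$ (i,j) * (of_nat (2 ^ d) / of_nat n))"
    using sum2_delta[OF i j] by simp
  also have "\<dots> = M $$ (i,j)" using n_pos by simp
  finally show "gC (coef M) $$ (i,j) = M $$ (i,j)" .
qed (use M in auto)

end

context clrep
begin

abbreviation FF :: "nat set" where "FF \<equiv> {..<d}"

lemma GF_comm:
  assumes A: "A \<subseteq> {..<d}"
  shows "G FF * G A = G A * G FF"
proof -
  have fA: "finite A" using A finite_subset by blast
  have i: "FF \<inter> A = A" using A by auto
  have ev: "even (card FF * card A + card A)" using odd_d by simp
  have s: "cl_sign eps FF A = cl_sign eps A FF"
    using cl_sign_swap[of FF A eps] fA i ev by simp
  have sd: "sym_diff FF A = sym_diff A FF" by auto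
  show ?thesis unfolding G_mult[OF subset_refl A] G_mult[OF A subset_refl] s sd ..
qed

definition mu :: complex where "mu = (SOME m. m \<noteq> 0 \<and> G FF = m \<cdot>\<^sub>m 1\<^sub>m n)"

lemma mu: "mu \<noteq> 0" "G FF = mu \<cdot>\<^sub>m 1\<^sub>m n"
proof -
  have GF: "G FF \<in> carrier_mat n n" "Gi FF \<in> carrier_mat n n" using G_carrier Gi_carrier by auto
  obtain m where m: "G FF = m \<cdot>\<^sub>m 1\<^sub>m n" using schur[OF GF(1)] GF_comm by metis
  have "m \<noteq> 0"
  proof
    assume m0: "m = 0"
    have "1\<^sub>m n = G FF * Gi FF" using G_Gi[of FF] by simp
    also have "\<dots> = (0 \<cdot>\<^sub>m 1\<^sub>m n) * Gi FF" using m m0 by simp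
    also have "\<dots> = 0 \<cdot>\<^sub>m Gi FF" using GF by (simp add: mult_smult_assoc_mat[of _ n n _ n])
    finally have "(1\<^sub>m n :: complex mat) $$ (0,0) = (0 \<cdot>\<^sub>m Gi FF) $$ (0,0)" by simp
    then show False using n_pos GF by simp
  qed
  then have "\<exists>m. m \<noteq> 0 \<and> G FF = m \<cdot>\<^sub>m 1\<^sub>m n" using m by blast
  from someI_ex[OF this] show "mu \<noteq> 0" "G FF = mu \<cdot>\<^sub>m 1\<^sub>m n" unfolding mu_def by auto
qed

definition bF :: "complex cl" where "bF = cl_basis FF"

lemma bF_odd: "bF \<in> cl_odd d"
  unfolding bF_def cl_odd_def cl_carrier_def cl_basis_def using odd_d by auto

lemma gC_bF: "gC bF = G FF" unfolding bF_def by (rule gC_basis) simp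

lemma bF_sq: "mul bF bF = cl_scal (complex_of_real (cl_sign eps FF FF))"
  unfolding bF_def mult_basis[OF subset_refl subset_refl] sd_self cl_scal_def by auto

lemma odd_mult_odd: "x \<in> cl_odd d \<Longrightarrow> y \<in> cl_odd d \<Longrightarrow> mul x y \<in> cl_even d"
proof -
  assume a: "x \<in> cl_odd d" "y \<in> cl_odd d"
  have "homog False (mul x y)" using mult_homog[OF odd_homog[OF a(1)] odd_homog[OF a(2)], of d eps] by simp
  then show ?thesis using homog_even[of "mul x y" d] mult_carrier[of d eps x y] by blast
qed

lemma odd_carrier: "x \<in> cl_odd d \<Longrightarrow> x \<in> cl_carrier d" unfolding cl_odd_def by auto
lemma even_carrier: "x \<in> cl_even d \<Longrightarrow> x \<in> cl_carrier d" unfolding cl_even_def by auto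

lemma inj_odd:
  assumes x: "x \<in> cl_odd d" and y: "y \<in> cl_odd d" and eq: "gC x = gC y"
  shows "x = y"
proof -
  have "mul bF x = mul bF y"
    by (rule inj_even[OF odd_mult_odd[OF bF_odd x] odd_mult_odd[OF bF_odd y]]) (simp add: gC_mult eq)
  then have "mul bF (mul bF x) = mul bF (mul bF y)" by simp
  then have "mul (mul bF bF) x = mul (mul bF bF) y" by (simp add: mult_assoc)
  then have "(\<lambda>A. complex_of_real (cl_sign eps FF FF) * x A) = (\<lambda>A. complex_of_real (cl_sign eps FF FF) * y A)"
    unfolding bF_sq mult_scal_left[OF odd_carrier[OF x]] mult_scal_left[OF odd_carrier[OF y]] .
  moreover have "cl_sign eps FF FF \<noteq> 0" using sign_nz by simp
  ultimately show ?thesis by (auto intro!: ext dest: fun_cong)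
qed

lemma surj_even:
  assumes M: "M \<in> carrier_mat n n"
  shows "\<exists>x\<in>cl_even d. gC x = M"
proof -
  define c where "c = coef M"
  have cc: "c \<in> cl_carrier d" unfolding c_def by (rule coef_carrier)
  define xp where "xp = (\<lambda>A. if even (card A) then c A else 0)"
  define xm where "xm = (\<lambda>A. if odd (card A) then c A else 0)"
  have xp: "xp \<in> cl_even d" using cc unfolding xp_def cl_even_def cl_carrier_def by auto
  have xm: "xm \<in> cl_odd d" using cc unfolding xm_def cl_odd_def cl_carrier_def by auto
  have csplit: "c = (\<lambda>A. xp A + xm A)" unfolding xp_def xm_def by auto
  define w where "w = mul bF xm"
  have we: "w \<in> cl_even d" unfolding w_def by (rule odd_mult_odd[OF bF_odd xm])
  have gw: "gC w = mu \<cdot>\<^sub>m gC xm"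
    unfolding w_def gC_mult gC_bF mu(2) using gC_carrier[of xm] by (simp add: mult_smult_assoc_mat[of _ n n _ n])
  define x where "x = (\<lambda>A. xp A + inverse mu * w A)"
  have xe: "x \<in> cl_even d"
    using xp we unfolding x_def cl_even_def cl_carrier_def by auto
  have "gC x = gC xp + inverse mu \<cdot>\<^sub>m gC w" unfolding x_def gC_add gC_smult ..
  also have "inverse mu \<cdot>\<^sub>m gC w = gC xm" unfolding gw smult_smult_m using mu(1) by (simp add: one_smult_m)
  also have "gC xp + gC xm = gC c" unfolding csplit gC_add ..
  also have "gC c = M" unfolding c_def by (rule gC_coef[OF M])
  finally show ?thesis using xe by blast
qed

end

context clrep
begin

lemma vec_odd: "v \<in> cl_vecs d \<Longrightarrow> cl_complexify v \<in> cl_odd d"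
  unfolding cl_vecs_def cl_odd_def cl_carrier_def cl_complexify_def by auto

lemma vec_carrier: "v \<in> cl_vecs d \<Longrightarrow> v \<in> cl_carrier d"
  unfolding cl_vecs_def by auto

lemma even_mult_odd: "x \<in> cl_even d \<Longrightarrow> y \<in> cl_odd d \<Longrightarrow> mul x y \<in> cl_odd d"
proof -
  assume a: "x \<in> cl_even d" "y \<in> cl_odd d"
  have "homog True (mul x y)" using mult_homog[OF even_homog[OF a(1)] odd_homog[OF a(2)], of d eps] by simp
  then show ?thesis using homog_odd[of "mul x y" d] mult_carrier[of d eps x y] by blast
qed

lemma odd_mult_even: "x \<in> cl_odd d \<Longrightarrow> y \<in> cl_even d \<Longrightarrow> mul x y \<in> cl_odd d"
proof -
  assume a: "x \<in> cl_odd d" "y \<in> cl_even d"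
  have "homog True (mul x y)" using mult_homog[OF odd_homog[OF a(1)] even_homog[OF a(2)], of d eps] by simp
  then show ?thesis using homog_odd[of "mul x y" d] mult_carrier[of d eps x y] by blast
qed

lemma scal1_even: "cl_scal 1 \<in> cl_even d"
  unfolding cl_even_def cl_carrier_def cl_scal_def by auto

lemma gC_one: "gC (cl_scal 1) = 1\<^sub>m n"
  unfolding gC_scal by (simp add: one_smult_m)

lemma conj_vec:
  assumes x: "x \<in> cl_even d" and y: "y \<in> cl_even d" and v: "v \<in> cl_vecs d"
  shows "gC (mul (mul x (cl_complexify v)) y) = gC x * g v * gC y"
  unfolding gC_mult g_gC[OF vec_carrier[OF v]] ..

lemma image_L:
  assumes x: "x \<in> special_clifford_group d eps"
  shows "gC x \<in> lipschitz_group d n g"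
proof -
  note X = sgroup_D[OF x]
  define xi where "xi = cl_inverse d eps x"
  have p1: "gC x * gC xi = 1\<^sub>m n" unfolding xi_def gC_mult[symmetric] X(5) gC_one ..
  have p2: "gC xi * gC x = 1\<^sub>m n" unfolding xi_def gC_mult[symmetric] X(6) gC_one ..
  have e: "gC x * g v * gC xi = gC (tilde_Ad d eps x (cl_complexify v))" if v: "v \<in> cl_vecs d" for v
    unfolding tilde_Ad_def par_even[OF X(2)] xi_def gC_mult g_gC[OF vec_carrier[OF v]] ..
  have "(\<lambda>v. gC x * g v * gC xi) ` cl_vecs d = (\<lambda>v. gC (tilde_Ad d eps x (cl_complexify v))) ` cl_vecs d"
    using e by (auto simp: image_iff)
  also have "\<dots> = gC ` (tilde_Ad d eps x ` (cl_complexify ` cl_vecs d))" by (simp add: image_image)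
  also have "\<dots> = gC ` (cl_complexify ` cl_vecs d)" unfolding X(7) ..
  also have "\<dots> = g ` cl_vecs d" using g_gC vec_carrier by (auto simp: image_iff)
  finally show ?thesis unfolding lipschitz_group_def using p1 p2 gC_carrier by blast
qed

lemma L_image:
  assumes phi: "phi \<in> lipschitz_group d n g"
  shows "\<exists>x\<in>special_clifford_group d eps. gC x = phi"
proof -
  obtain psi where pc: "phi \<in> carrier_mat n n" and psic: "psi \<in> carrier_mat n n"
    and pp: "phi * psi = 1\<^sub>m n" "psi * phi = 1\<^sub>m n"
    and im: "(\<lambda>v. phi * g v * psi) ` cl_vecs d = g ` cl_vecs d"
    using phi unfolding lipschitz_group_def by auto
  obtain x where x: "x \<in> cl_even d" "gC x = phi" using surj_even[OF pc] by auto
  obtain y where y: "y \<in> cl_even d" "gC y = psi" using surj_even[OF psic] by auto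
  have xy: "mul x y = cl_scal 1"
    by (rule inj_even[OF even_mult[OF x(1) y(1)] scal1_even]) (simp add: gC_mult x y pp gC_one)
  have yx: "mul y x = cl_scal 1"
    by (rule inj_even[OF even_mult[OF y(1) x(1)] scal1_even]) (simp add: gC_mult x y pp gC_one)
  have xu: "x \<in> cl_units d eps" using xy yx even_carrier[OF x(1)] even_carrier[OF y(1)] unfolding cl_units_def by auto
  have xinv: "cl_inverse d eps x = y" by (rule inverse_eq[OF even_carrier[OF y(1)] xy yx])
  have ad: "tilde_Ad d eps x v' = mul (mul x v') y" for v'
    unfolding tilde_Ad_def par_even[OF x(1)] xinv ..
  have key: "tilde_Ad d eps x (cl_complexify v) = cl_complexify w"
    if v: "v \<in> cl_vecs d" and w: "w \<in> cl_vecs d" and eq: "phi * g v * psi = g w" for v w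
  proof -
    have o1: "mul (mul x (cl_complexify v)) y \<in> cl_odd d"
      by (rule odd_mult_even[OF even_mult_odd[OF x(1) vec_odd[OF v]] y(1)])
    have "gC (mul (mul x (cl_complexify v)) y) = gC (cl_complexify w)"
      unfolding conj_vec[OF x(1) y(1) v] x(2) y(2) eq g_gC[OF vec_carrier[OF w]] ..
    then show ?thesis unfolding ad by (rule inj_odd[OF o1 vec_odd[OF w]])
  qed
  have "tilde_Ad d eps x ` (cl_complexify ` cl_vecs d) = cl_complexify ` cl_vecs d"
  proof
    show "tilde_Ad d eps x ` cl_complexify ` cl_vecs d \<subseteq> cl_complexify ` cl_vecs d"
    proof
      fix u assume "u \<in> tilde_Ad d eps x ` cl_complexify ` cl_vecs d"
      then obtain v where v: "v \<in> cl_vecs d" and u: "u = tilde_Ad d eps x (cl_complexify v)" by auto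
      have "phi * g v * psi \<in> g ` cl_vecs d" using im v by blast
      then obtain w where w: "w \<in> cl_vecs d" "phi * g v * psi = g w" by auto
      show "u \<in> cl_complexify ` cl_vecs d" using key[OF v w(1) w(2)] u w(1) by auto
    qed
  next
    show "cl_complexify ` cl_vecs d \<subseteq> tilde_Ad d eps x ` cl_complexify ` cl_vecs d"
    proof
      fix u assume "u \<in> cl_complexify ` cl_vecs d"
      then obtain w where w: "w \<in> cl_vecs d" and u: "u = cl_complexify w" by auto
      have "g w \<in> (\<lambda>v. phi * g v * psi) ` cl_vecs d" using im w by blast
      then obtain v where v: "v \<in> cl_vecs d" "g w = phi * g v * psi" by auto
      have "u = tilde_Ad d eps x (cl_complexify v)" using key[OF v(1) w v(2)[symmetric]] u by simp
      then show "u \<in> tilde_Ad d eps x ` cl_complexify ` cl_vecs d" using v(1) by blast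
    qed
  qed
  then have "x \<in> special_clifford_group d eps"
    unfolding special_clifford_group_def clifford_group_def using xu x(1) by auto
  then show ?thesis using x(2) by blast
qed

lemma part2: "bij_betw gC (special_clifford_group d eps) (lipschitz_group d n g)"
  unfolding bij_betw_def
proof
  show "inj_on gC (special_clifford_group d eps)"
    by (rule inj_onI) (rule inj_even[OF sgroup_D(2) sgroup_D(2)])
  show "gC ` special_clifford_group d eps = lipschitz_group d n g"
    using image_L L_image by blast
qed

end

context clrep
begin

definition Nc :: "complex cl \<Rightarrow> complex" where
  "Nc x = (\<Sum>A\<in>PP d. complex_of_real (cl_sign eps A A) * cl_tilde_rev x A * x A)"

lemma N_empty: "cl_N d eps x {} = Nc x"
proof -
  have "cl_N d eps x {} = (\<Sum>A\<in>PP d. \<Sum>B\<in>PP d. if sym_diff A B = {} then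
      complex_of_real (cl_sign eps A B) * cl_tilde_rev x A * x B else 0)"
    unfolding cl_N_def by (rule mult_apply) simp
  also have "\<dots> = (\<Sum>A\<in>PP d. \<Sum>B\<in>PP d. if B = A then
      complex_of_real (cl_sign eps A A) * cl_tilde_rev x A * x A else 0)"
  proof (intro sum.cong refl)
    fix A B :: "nat set"
    have "(sym_diff A B = {}) = (B = A)" by blast
    then show "(if sym_diff A B = {} then complex_of_real (cl_sign eps A B) * cl_tilde_rev x A * x B else 0) =
      (if B = A then complex_of_real (cl_sign eps A A) * cl_tilde_rev x A * x A else 0)" by auto
  qed
  also have "\<dots> = Nc x" unfolding Nc_def by (simp add: sum.delta')
  finally show ?thesis .
qed

definition rr :: "complex cl \<Rightarrow> real" where "rr x = 1 / sqrt (cmod (Nc x))"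

lemma normalize_spinc:
  assumes x: "x \<in> special_clifford_group d eps"
  shows "(\<lambda>A. complex_of_real (rr x) * x A) \<in> spinc d eps" "rr x > 0"
proof -
  note X = sgroup_D[OF x]
  obtain c where c: "c \<noteq> 0" "cl_N d eps x = cl_scal c" using N_scalar[OF x] by auto
  have Ncx: "Nc x = c" using N_empty[of x] c(2) by (simp add: cl_scal_def)
  define r where "r = rr x"
  have r0: "r > 0" unfolding r_def rr_def Ncx using c by auto
  have rr1: "r * r * cmod c = 1" unfolding r_def rr_def Ncx using c by (simp add: field_simps)
  define s where "s = (\<lambda>A. complex_of_real r * x A)"
  have sG: "s \<in> special_clifford_group d eps" unfolding s_def by (rule scal_group[OF x]) (use r0 in simp)
  have se: "s \<in> cl_even d" using sgroup_D(2)[OF sG] .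
  have "cl_N d eps s = mul (cl_rev s) s" by (rule N_even[OF se])
  also have "\<dots> = (\<lambda>C. complex_of_real r * (complex_of_real r * cl_N d eps x C))"
    unfolding s_def rev_smult_real mult_smult_left mult_smult_right N_even[OF X(2)] ..
  also have "\<dots> = cl_scal (complex_of_real (r * r) * c)"
    unfolding c(2) by (auto simp: cl_scal_def)
  finally have Ns: "cl_N d eps s = cl_scal (complex_of_real (r * r) * c)" .
  have "cmod (complex_of_real (r * r) * c) = 1" using rr1 r0 by (simp add: norm_mult abs_mult)
  then show "(\<lambda>A. complex_of_real (rr x) * x A) \<in> spinc d eps"
    unfolding spinc_def using sG Ns unfolding s_def r_def by auto
  show "rr x > 0" using r0 unfolding r_def .
qed

lemma spinc_rr:
  assumes s: "s \<in> spinc d eps"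
  shows "rr s = 1"
proof -
  obtain c where c: "cl_N d eps s = cl_scal c" "cmod c = 1" using s unfolding spinc_def by auto
  have "Nc s = c" using N_empty[of s] c(1) by (simp add: cl_scal_def)
  then show ?thesis unfolding rr_def using c(2) by simp
qed

definition invf :: "(nat \<times> nat \<Rightarrow> complex) \<Rightarrow> complex cl" where
  "invf m = (\<lambda>A. if A \<subseteq> {..<d} \<and> even (card A) then (\<Sum>p<n. \<Sum>q<n. Gi A $$ (p,q) * m (q,p)) / of_nat n else 0)"

lemma invf_gC:
  assumes x: "x \<in> cl_even d"
  shows "invf (mat_to_fun n (gC x)) = x"
proof
  fix A
  show "invf (mat_to_fun n (gC x)) A = x A"
  proof (cases "A \<subseteq> {..<d} \<and> even (card A)")
    case True
    then have A: "A \<subseteq> {..<d}" "even (card A)" by auto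
    have "(\<Sum>p<n. \<Sum>q<n. Gi A $$ (p,q) * mat_to_fun n (gC x) (q,p)) = tr n (Gi A * gC x)"
      unfolding tr_def
      by (intro sum.cong refl) (simp add: mult_entry[OF Gi_carrier[OF A(1)] gC_carrier] mat_to_fun_def)
    also have "\<dots> = of_nat n * x A" by (rule coeff_formula[OF x A])
    finally show ?thesis unfolding invf_def using True n_pos by simp
  next
    case False
    then show ?thesis unfolding invf_def using even_zero[OF x] by auto
  qed
qed

definition Lf where "Lf = mat_to_fun n ` lipschitz_group d n g"

definition fmap :: "(nat \<times> nat \<Rightarrow> complex) \<Rightarrow> complex cl" where
  "fmap m = (\<lambda>A. complex_of_real (rr (invf m)) * invf m A)"

definition gmap :: "complex cl \<Rightarrow> (nat \<times> nat \<Rightarrow> complex)" where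
  "gmap s = mat_to_fun n (gC s)"

lemma Lf_D:
  assumes "m \<in> Lf"
  obtains x where "x \<in> special_clifford_group d eps" "m = mat_to_fun n (gC x)"
proof -
  obtain phi where phi: "phi \<in> lipschitz_group d n g" "m = mat_to_fun n phi" using assms unfolding Lf_def by auto
  obtain x where "x \<in> special_clifford_group d eps" "gC x = phi" using L_image[OF phi(1)] by auto
  then show ?thesis using that phi(2) by blast
qed

lemma Lf_invf: "x \<in> special_clifford_group d eps \<Longrightarrow> invf (mat_to_fun n (gC x)) = x"
  using invf_gC sgroup_D(2) by blast

lemma fmap_in: "m \<in> Lf \<Longrightarrow> fmap m \<in> spinc d eps"
  by (erule Lf_D) (simp add: fmap_def Lf_invf normalize_spinc)

lemma spinc_sg: "s \<in> spinc d eps \<Longrightarrow> s \<in> special_clifford_group d eps"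
  unfolding spinc_def by auto

lemma gmap_in: "s \<in> spinc d eps \<Longrightarrow> gmap s \<in> Lf"
  unfolding gmap_def Lf_def using image_L spinc_sg by blast

lemma fmap_gmap: "s \<in> spinc d eps \<Longrightarrow> fmap (gmap s) = s"
  unfolding fmap_def gmap_def using Lf_invf[OF spinc_sg] spinc_rr by simp

lemma mat_to_fun_smult: "M \<in> carrier_mat n n \<Longrightarrow> mat_to_fun n (k \<cdot>\<^sub>m M) = (\<lambda>ij. k * mat_to_fun n M ij)"
  unfolding mat_to_fun_def by (auto intro!: ext)

lemma smult_Lf:
  assumes m: "m \<in> Lf" and k: "k \<noteq> 0"
  shows "(\<lambda>ij. k * m ij) \<in> Lf"
proof -
  obtain x where x: "x \<in> special_clifford_group d eps" "m = mat_to_fun n (gC x)" using Lf_D[OF m] by auto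
  have "(\<lambda>ij. k * m ij) = mat_to_fun n (gC (\<lambda>A. k * x A))"
    unfolding x(2) gC_smult mat_to_fun_smult[OF gC_carrier] ..
  then show ?thesis unfolding Lf_def using image_L[OF scal_group[OF x(1) k]] by auto
qed

lemma gmap_fmap: "m \<in> Lf \<Longrightarrow> gmap (fmap m) = (\<lambda>ij. complex_of_real (rr (invf m)) * m ij)"
proof (erule Lf_D)
  fix x assume x: "x \<in> special_clifford_group d eps" and m: "m = mat_to_fun n (gC x)"
  show "gmap (fmap m) = (\<lambda>ij. complex_of_real (rr (invf m)) * m ij)"
    unfolding fmap_def gmap_def m Lf_invf[OF x] gC_smult mat_to_fun_smult[OF gC_carrier] ..
qed

end

lemma coord_cont: "continuous_on S (\<lambda>m. m i)"
  by (rule continuous_on_subset[OF continuous_on_product_coordinates]) simp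

context clrep
begin

lemma cont_invf: "continuous_on S (\<lambda>m. invf m A)"
proof (cases "A \<subseteq> {..<d} \<and> even (card A)")
  case True
  then have "(\<lambda>m. invf m A) = (\<lambda>m. (\<Sum>p<n. \<Sum>q<n. Gi A $$ (p,q) * m (q,p)) * inverse (of_nat n))"
    unfolding invf_def by (auto simp: divide_inverse)
  moreover have "continuous_on S (\<lambda>m. (\<Sum>p<n. \<Sum>q<n. Gi A $$ (p,q) * m (q,p)) * inverse (of_nat n :: complex))"
    by (intro continuous_intros coord_cont)
  ultimately show ?thesis by metis
next
  case False
  then have "(\<lambda>m. invf m A) = (\<lambda>m. 0)" by (simp only: invf_def if_not_P[OF False] if_False)
  then show ?thesis by (metis continuous_on_const)
qed

lemma cont_Nc: "continuous_on S (\<lambda>m. Nc (invf m))"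
  unfolding Nc_def cl_tilde_rev_def cl_rev_def cl_par_def
  by (intro continuous_intros cont_invf)

lemma Nc_nz: "m \<in> Lf \<Longrightarrow> Nc (invf m) \<noteq> 0"
proof (erule Lf_D)
  fix x assume x: "x \<in> special_clifford_group d eps" and m: "m = mat_to_fun n (gC x)"
  obtain c where c: "c \<noteq> 0" "cl_N d eps x = cl_scal c" using N_scalar[OF x] by auto
  have "Nc x = c" using N_empty[of x] c(2) by (simp add: cl_scal_def)
  then show "Nc (invf m) \<noteq> 0" unfolding m Lf_invf[OF x] using c by simp
qed

lemma cont_rr: "continuous_on Lf (\<lambda>m. rr (invf m))"
  unfolding rr_def
  by (intro continuous_intros cont_Nc) (use Nc_nz in auto)

lemma cont_fmap: "continuous_on Lf fmap"
  unfolding fmap_def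
  by (intro continuous_on_coordinatewise_then_product continuous_intros cont_invf
      continuous_on_compose2[OF continuous_on_of_real_id cont_rr]) auto

lemma cont_gmap: "continuous_on S gmap"
proof (rule continuous_on_coordinatewise_then_product)
  fix ij :: "nat \<times> nat"
  obtain i j where ij: "ij = (i,j)" by fastforce
  show "continuous_on S (\<lambda>s. gmap s ij)"
  proof (cases "i < n \<and> j < n")
    case True
    then have "(\<lambda>s. gmap s ij) = (\<lambda>s. \<Sum>A\<in>PP d. s A * G A $$ (i,j))"
      unfolding gmap_def mat_to_fun_def ij by (auto simp: gC_index)
    moreover have "continuous_on S (\<lambda>s. \<Sum>A\<in>PP d. s A * G A $$ (i,j))"
      by (intro continuous_intros coord_cont)
    ultimately show ?thesis by metis
  next
    case False
    then have "(\<lambda>s. gmap s ij) = (\<lambda>s. 0)" unfolding gmap_def mat_to_fun_def ij by (simp only: if_not_P[OF False] case_prod_conv if_False)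
    then show ?thesis by (metis continuous_on_const)
  qed
qed

definition HH :: "real \<times> (nat \<times> nat \<Rightarrow> complex) \<Rightarrow> (nat \<times> nat \<Rightarrow> complex)" where
  "HH p = (\<lambda>ij. complex_of_real ((1 - fst p) * rr (invf (snd p)) + fst p) * snd p ij)"

lemma cont_HH: "continuous_on ({0..1} \<times> Lf) HH"
proof -
  have r: "continuous_on ({0..1} \<times> Lf) (\<lambda>p. rr (invf (snd p)))"
    by (rule continuous_on_compose2[OF cont_rr continuous_on_snd[OF continuous_on_id]]) auto
  show ?thesis unfolding HH_def
    by (intro continuous_on_coordinatewise_then_product continuous_intros
        continuous_on_compose2[OF continuous_on_of_real_id] r
        continuous_on_product_then_coordinatewise[OF continuous_on_snd[OF continuous_on_id]]) auto
qed

lemma HH_in: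
  assumes t: "t \<in> {0..1}" and m: "m \<in> Lf"
  shows "HH (t, m) \<in> Lf"
proof -
  obtain x where x: "x \<in> special_clifford_group d eps" "m = mat_to_fun n (gC x)" using Lf_D[OF m] by auto
  have r: "rr (invf m) > 0" unfolding x(2) Lf_invf[OF x(1)] using normalize_spinc(2)[OF x(1)] .
  have "(1 - t) * rr (invf m) + t > 0"
  proof (cases "t = 0")
    case True then show ?thesis using r by simp
  next
    case False then have "t > 0" using t by auto
    moreover have "(1 - t) * rr (invf m) \<ge> 0" using t r by auto
    ultimately show ?thesis by linarith
  qed
  then have "complex_of_real ((1 - t) * rr (invf m) + t) \<noteq> 0" by (metis of_real_eq_0_iff less_irrefl)
  from smult_Lf[OF m this] show ?thesis unfolding HH_def by simp
qed

lemma part3: "(subtopology euclidean Lf) homotopy_equivalent_space (subtopology euclidean (spinc d eps))"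
  unfolding homotopy_equivalent_space_def
proof (intro exI conjI)
  show cf: "continuous_map (subtopology euclidean Lf) (subtopology euclidean (spinc d eps)) fmap"
    using cont_fmap fmap_in by auto
  show cg: "continuous_map (subtopology euclidean (spinc d eps)) (subtopology euclidean Lf) gmap"
    using cont_gmap gmap_in by auto
  show "homotopic_with (\<lambda>x. True) (subtopology euclidean Lf) (subtopology euclidean Lf) (gmap \<circ> fmap) id"
  proof (subst homotopic_with, simp, intro exI conjI ballI)
    show "continuous_map (prod_topology (subtopology euclidean {0..1}) (subtopology euclidean Lf)) (subtopology euclidean Lf) HH"
      using cont_HH HH_in by auto
    fix x assume x: "x \<in> topspace (subtopology euclidean Lf)"
    then have xL: "x \<in> Lf" by simp
    show "HH (0, x) = (gmap \<circ> fmap) x" unfolding HH_def using gmap_fmap[OF xL] by simp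
    show "HH (1, x) = id x" unfolding HH_def by simp
  qed simp
  show "homotopic_with (\<lambda>x. True) (subtopology euclidean (spinc d eps)) (subtopology euclidean (spinc d eps)) (fmap \<circ> gmap) id"
    by (rule homotopic_with_equal) (use cf cg fmap_gmap in \<open>auto intro: continuous_map_compose\<close>)
qed

end

theorem proposition4p5:
  fixes d n :: nat and eps :: "nat \<Rightarrow> real" and g :: "real cl \<Rightarrow> complex mat"
  assumes "odd d"
    and "\<forall>i < d. eps i \<noteq> 0"
    and "is_cl_rep d eps n g"
    and "irreducible_cl_rep d eps n g"
  shows "special_clifford_group d eps = spinc_times_Cx d eps
    \<and> bij_betw (gammaC d n g) (special_clifford_group d eps) (lipschitz_group d n g)
    \<and> (\<forall>x \<in> special_clifford_group d eps. \<forall>y \<in> special_clifford_group d eps.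
          gammaC d n g (cl_mult d eps x y) = gammaC d n g x * gammaC d n g y)
    \<and> (subtopology euclidean (mat_to_fun n ` lipschitz_group d n g))
          homotopy_equivalent_space (subtopology euclidean (spinc d eps))"
proof -
  interpret C: clrep d eps n g
    by unfold_locales (use assms in auto)
  show ?thesis
    using C.part1 C.part2 C.gC_mult C.part3 unfolding C.Lf_def by blast
qed

end
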